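(* Let $X=\{u_1x=v_1y,\ u_2z=v_2t,\ w^2+(x+z)(y+t)=0\}\subset\mathbb{P}^1\times\mathbb{P}^1\times\mathbb{P}^4$ and let $\mathbf{G}\subset\mathrm{Aut}(X)$ be the subgroup generated by $\Gamma$ and $\tau_1,\tau_2,\tau_3$. Then (1) $X$ has no $\mathbf{G}$-fixed points; (2) the only $\mathbf{G}$-invariant irreducible curves in $X$ are $C$ and $C'$.
   Context: Coordinates are $([u_1:v_1],[u_2:v_2],[x:y:z:t:w])$. $\tau_1\colon([u_1:v_1],[u_2:v_2],[x:y:z:t:w])\mapsto([v_1:u_1],[v_2:u_2],[y:x:t:z:w])$, $\tau_2\colon\mapsto([u_2:v_2],[u_1:v_1],[z:t:x:y:w])$, $\tau_3\colon\mapsto([u_1:v_1],[u_2:v_2],[x:y:z:t:-w])$. $\Gamma\cong\mathbb{C}^\ast$ consists of the automorphisms $([u_1:v_1],[u_2:v_2],[x:y:z:t:w])\mapsto([u_1/\lambda:\lambda v_1],[u_2/\lambda:\lambda v_2],[\lambda x:y/\lambda:\lambda z:t/\lambda:w])$, $\lambda\in\mathbb{C}^\ast$. $C=\{w=0,\ x+z=0,\ y+t=0,\ u_1z=v_1t,\ u_2z=v_2t,\ v_1u_2=u_1v_2\}$ is the singular curve of $X$, and $C'=X\cap\{x=z,\ t=y\}$. *)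

theory Defs
  imports Main "HOL.Complex"
begin

text \<open>A point of P1 x P1 x P4 is represented by a representative
  ((u1,v1),(u2,v2),(x,y,z,t,w)); a point is the class of all its representatives
  modulo independent rescaling of the three factors.\<close>

type_synonym rep = "(complex \<times> complex) \<times> (complex \<times> complex) \<times>
                    (complex \<times> complex \<times> complex \<times> complex \<times> complex)"

definition scl :: "complex \<Rightarrow> complex \<Rightarrow> complex \<Rightarrow> rep \<Rightarrow> rep" where
  "scl a b c r = (case r of ((u1,v1),(u2,v2),(x,y,z,t,w)) \<Rightarrow>
     ((a*u1, a*v1), (b*u2, b*v2), (c*x, c*y, c*z, c*t, c*w)))"

definition valid :: "rep \<Rightarrow> bool" where
  "valid r = (case r of ((u1,v1),(u2,v2),(x,y,z,t,w)) \<Rightarrow>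
     (u1,v1) \<noteq> (0,0) \<and> (u2,v2) \<noteq> (0,0) \<and> (x,y,z,t,w) \<noteq> (0,0,0,0,0))"

definition proj_eq :: "rep \<Rightarrow> rep \<Rightarrow> bool" where
  "proj_eq r s \<longleftrightarrow> (\<exists>a b c. a \<noteq> 0 \<and> b \<noteq> 0 \<and> c \<noteq> 0 \<and> s = scl a b c r)"

definition pt :: "rep \<Rightarrow> rep set" where
  "pt r = {s. proj_eq r s}"

definition PP :: "rep set set" where
  "PP = pt ` {r. valid r}"

inductive poly_fun :: "(rep \<Rightarrow> complex) \<Rightarrow> bool" where
  const: "poly_fun (\<lambda>_. c)"
| cu1: "poly_fun (\<lambda>((u1,v1),(u2,v2),(x,y,z,t,w)). u1)"
| cv1: "poly_fun (\<lambda>((u1,v1),(u2,v2),(x,y,z,t,w)). v1)"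
| cu2: "poly_fun (\<lambda>((u1,v1),(u2,v2),(x,y,z,t,w)). u2)"
| cv2: "poly_fun (\<lambda>((u1,v1),(u2,v2),(x,y,z,t,w)). v2)"
| cx: "poly_fun (\<lambda>((u1,v1),(u2,v2),(x,y,z,t,w)). x)"
| cy: "poly_fun (\<lambda>((u1,v1),(u2,v2),(x,y,z,t,w)). y)"
| cz: "poly_fun (\<lambda>((u1,v1),(u2,v2),(x,y,z,t,w)). z)"
| ct: "poly_fun (\<lambda>((u1,v1),(u2,v2),(x,y,z,t,w)). t)"
| cw: "poly_fun (\<lambda>((u1,v1),(u2,v2),(x,y,z,t,w)). w)"
| add: "poly_fun f \<Longrightarrow> poly_fun g \<Longrightarrow> poly_fun (\<lambda>r. f r + g r)"
| mult: "poly_fun f \<Longrightarrow> poly_fun g \<Longrightarrow> poly_fun (\<lambda>r. f r * g r)"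

definition mhom_poly :: "(rep \<Rightarrow> complex) \<Rightarrow> bool" where
  "mhom_poly f \<longleftrightarrow> poly_fun f \<and>
     (\<exists>d1 d2 d3::nat. \<forall>a b c r. f (scl a b c r) = a^d1 * b^d2 * c^d3 * f r)"

definition zclosed :: "rep set set \<Rightarrow> bool" where
  "zclosed S \<longleftrightarrow> (\<exists>F. (\<forall>f\<in>F. mhom_poly f) \<and>
      S = {P \<in> PP. \<forall>r\<in>P. \<forall>f\<in>F. f r = 0})"

definition zirreducible :: "rep set set \<Rightarrow> bool" where
  "zirreducible S \<longleftrightarrow> zclosed S \<and> S \<noteq> {} \<and>
     (\<forall>A B. zclosed A \<and> zclosed B \<and> S = A \<union> B \<longrightarrow> S = A \<or> S = B)"

text \<open>Irreducible curve: irreducible closed subset of (Krull) dimension exactly 1.\<close>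
definition irred_curve :: "rep set set \<Rightarrow> bool" where
  "irred_curve Z \<longleftrightarrow> zirreducible Z \<and>
     (\<exists>W. zirreducible W \<and> W \<subset> Z) \<and>
     \<not> (\<exists>W1 W2. zirreducible W1 \<and> zirreducible W2 \<and> W2 \<subset> W1 \<and> W1 \<subset> Z)"

definition zero_set :: "(rep \<Rightarrow> bool) \<Rightarrow> rep set set" where
  "zero_set E = {P \<in> PP. \<forall>r\<in>P. E r}"

definition XX :: "rep set set" where
  "XX = zero_set (\<lambda>((u1,v1),(u2,v2),(x,y,z,t,w)).
      u1*x = v1*y \<and> u2*z = v2*t \<and> w^2 + (x+z)*(y+t) = 0)"

definition CC :: "rep set set" where
  "CC = zero_set (\<lambda>((u1,v1),(u2,v2),(x,y,z,t,w)).
      w = 0 \<and> x + z = 0 \<and> y + t = 0 \<and> u1*z = v1*t \<and> u2*z = v2*t \<and> v1*u2 = u1*v2)"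

definition CC' :: "rep set set" where
  "CC' = XX \<inter> zero_set (\<lambda>((u1,v1),(u2,v2),(x,y,z,t,w)). x = z \<and> t = y)"

definition tau1 :: "rep \<Rightarrow> rep" where
  "tau1 r = (case r of ((u1,v1),(u2,v2),(x,y,z,t,w)) \<Rightarrow> ((v1,u1),(v2,u2),(y,x,t,z,w)))"
definition tau2 :: "rep \<Rightarrow> rep" where
  "tau2 r = (case r of ((u1,v1),(u2,v2),(x,y,z,t,w)) \<Rightarrow> ((u2,v2),(u1,v1),(z,t,x,y,w)))"
definition tau3 :: "rep \<Rightarrow> rep" where
  "tau3 r = (case r of ((u1,v1),(u2,v2),(x,y,z,t,w)) \<Rightarrow> ((u1,v1),(u2,v2),(x,y,z,t,-w)))"
definition gam :: "complex \<Rightarrow> rep \<Rightarrow> rep" where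
  "gam l r = (case r of ((u1,v1),(u2,v2),(x,y,z,t,w)) \<Rightarrow>
      ((u1/l, l*v1),(u2/l, l*v2),(l*x, y/l, l*z, t/l, w)))"

definition lift :: "(rep \<Rightarrow> rep) \<Rightarrow> rep set \<Rightarrow> rep set" where
  "lift f P = pt (f (SOME r. r \<in> P))"

inductive_set GG :: "(rep set \<Rightarrow> rep set) set" where
  gid: "id \<in> GG"
| gt1: "lift tau1 \<in> GG"
| gt2: "lift tau2 \<in> GG"
| gt3: "lift tau3 \<in> GG"
| ggam: "l \<noteq> 0 \<Longrightarrow> lift (gam l) \<in> GG"
| gcomp: "g \<in> GG \<Longrightarrow> h \<in> GG \<Longrightarrow> g \<circ> h \<in> GG"
| ginv: "g \<in> GG \<Longrightarrow> inv_into XX g \<in> GG"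

end

theory Submission
  imports Defs "HOL-Computational_Algebra.Polynomial"
begin


definition "cU1 r = fst (fst (r::rep))"
definition "cV1 r = snd (fst (r::rep))"
definition "cU2 r = fst (fst (snd (r::rep)))"
definition "cV2 r = snd (fst (snd (r::rep)))"
definition "cX r = fst (snd (snd (r::rep)))"
definition "cY r = fst (snd (snd (snd (r::rep))))"
definition "cZ r = fst (snd (snd (snd (snd (r::rep)))))"
definition "cT r = fst (snd (snd (snd (snd (snd (r::rep))))))"
definition "cW r = snd (snd (snd (snd (snd (snd (r::rep))))))"

lemmas cdefs = cU1_def cV1_def cU2_def cV2_def cX_def cY_def cZ_def cT_def cW_def

lemma c_simps[simp]:
  "cU1 ((u1,v1),(u2,v2),(x,y,z,t,w)) = u1" "cV1 ((u1,v1),(u2,v2),(x,y,z,t,w)) = v1"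
  "cU2 ((u1,v1),(u2,v2),(x,y,z,t,w)) = u2" "cV2 ((u1,v1),(u2,v2),(x,y,z,t,w)) = v2"
  "cX ((u1,v1),(u2,v2),(x,y,z,t,w)) = x" "cY ((u1,v1),(u2,v2),(x,y,z,t,w)) = y"
  "cZ ((u1,v1),(u2,v2),(x,y,z,t,w)) = z" "cT ((u1,v1),(u2,v2),(x,y,z,t,w)) = t"
  "cW ((u1,v1),(u2,v2),(x,y,z,t,w)) = w"
  by (simp_all add: cdefs)

lemma rep_eq: "(r::rep) = ((cU1 r, cV1 r),(cU2 r, cV2 r),(cX r, cY r, cZ r, cT r, cW r))"
  by (simp add: cdefs)

lemma rep_ext: "cU1 r = cU1 s \<Longrightarrow> cV1 r = cV1 s \<Longrightarrow> cU2 r = cU2 s \<Longrightarrow> cV2 r = cV2 s \<Longrightarrow>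
  cX r = cX s \<Longrightarrow> cY r = cY s \<Longrightarrow> cZ r = cZ s \<Longrightarrow> cT r = cT s \<Longrightarrow> cW r = cW s \<Longrightarrow> r = s"
  by (metis rep_eq)

lemma scl_c[simp]:
  "cU1 (scl a b c r) = a * cU1 r" "cV1 (scl a b c r) = a * cV1 r"
  "cU2 (scl a b c r) = b * cU2 r" "cV2 (scl a b c r) = b * cV2 r"
  "cX (scl a b c r) = c * cX r" "cY (scl a b c r) = c * cY r" "cZ (scl a b c r) = c * cZ r"
  "cT (scl a b c r) = c * cT r" "cW (scl a b c r) = c * cW r"
  by (subst rep_eq[of r], simp add: scl_def)+

lemma valid_c: "valid r \<longleftrightarrow> (cU1 r \<noteq> 0 \<or> cV1 r \<noteq> 0) \<and> (cU2 r \<noteq> 0 \<or> cV2 r \<noteq> 0)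
   \<and> (cX r \<noteq> 0 \<or> cY r \<noteq> 0 \<or> cZ r \<noteq> 0 \<or> cT r \<noteq> 0 \<or> cW r \<noteq> 0)"
  by (subst rep_eq[of r], simp add: valid_def)

lemma scl_scl[simp]: "scl a b c (scl a' b' c' r) = scl (a*a') (b*b') (c*c') r"
  by (rule rep_ext) (simp_all add: mult.assoc)

lemma scl_1[simp]: "scl 1 1 1 r = r"
  by (rule rep_ext) simp_all

lemma valid_scl[simp]: "a \<noteq> 0 \<Longrightarrow> b \<noteq> 0 \<Longrightarrow> c \<noteq> 0 \<Longrightarrow> valid (scl a b c r) = valid r"
  by (simp add: valid_c)

lemma proj_eq_refl: "proj_eq r r"
  unfolding proj_eq_def by (rule exI[of _ 1], rule exI[of _ 1], rule exI[of _ 1]) simp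

lemma proj_eq_sym: "proj_eq r s \<Longrightarrow> proj_eq s r"
  unfolding proj_eq_def
  apply clarify
  subgoal for a b c
    apply (rule exI[of _ "1/a"], rule exI[of _ "1/b"], rule exI[of _ "1/c"]) by simp
  done

lemma proj_eq_trans: "proj_eq r s \<Longrightarrow> proj_eq s q \<Longrightarrow> proj_eq r q"
proof -
  assume "proj_eq r s" "proj_eq s q"
  then obtain a b c a' b' c' where "a \<noteq> 0" "b \<noteq> 0" "c \<noteq> 0" "s = scl a b c r"
    "a' \<noteq> 0" "b' \<noteq> 0" "c' \<noteq> 0" "q = scl a' b' c' s" unfolding proj_eq_def by blast
  then show ?thesis unfolding proj_eq_def
    by (intro exI[of _ "a'*a"] exI[of _ "b'*b"] exI[of _ "c'*c"]) simp
qed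

lemma in_pt: "r \<in> pt r" by (simp add: pt_def proj_eq_refl)

lemma pt_eq_iff: "pt r = pt s \<longleftrightarrow> proj_eq r s"
proof
  assume "pt r = pt s" then have "s \<in> pt r" using in_pt by metis
  then show "proj_eq r s" by (simp add: pt_def)
next
  assume "proj_eq r s"
  then show "pt r = pt s" unfolding pt_def
    using proj_eq_trans proj_eq_sym by blast
qed

lemma pt_scl: "a \<noteq> 0 \<Longrightarrow> b \<noteq> 0 \<Longrightarrow> c \<noteq> 0 \<Longrightarrow> pt (scl a b c r) = pt r"
  by (metis pt_eq_iff proj_eq_def proj_eq_sym)

lemma PP_iff: "pt r \<in> PP \<longleftrightarrow> valid r"
proof
  assume "pt r \<in> PP"
  then obtain s where "valid s" "pt r = pt s" by (auto simp: PP_def)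
  then have "proj_eq s r" by (metis pt_eq_iff)
  then show "valid r" using \<open>valid s\<close> by (auto simp: proj_eq_def)
qed (simp add: PP_def)

lemma PP_E: "P \<in> PP \<Longrightarrow> (\<And>r. valid r \<Longrightarrow> P = pt r \<Longrightarrow> thesis) \<Longrightarrow> thesis"
  by (auto simp: PP_def)

lemma zero_set_pt:
  assumes "\<And>a b c s. a \<noteq> 0 \<Longrightarrow> b \<noteq> 0 \<Longrightarrow> c \<noteq> 0 \<Longrightarrow> E (scl a b c s) = E s"
  shows "pt r \<in> zero_set E \<longleftrightarrow> valid r \<and> E r"
proof -
  have "(\<forall>s\<in>pt r. E s) \<longleftrightarrow> E r"
  proof
    assume "\<forall>s\<in>pt r. E s" then show "E r" using in_pt by blast
  next
    assume "E r"
    show "\<forall>s\<in>pt r. E s"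
    proof
      fix s assume "s \<in> pt r"
      then obtain a b c where "a \<noteq> 0" "b \<noteq> 0" "c \<noteq> 0" "s = scl a b c r"
        by (auto simp: pt_def proj_eq_def)
      then show "E s" using assms \<open>E r\<close> by simp
    qed
  qed
  then show ?thesis by (simp add: zero_set_def PP_iff)
qed

lemma lift_pt:
  assumes "\<And>a b c s. a \<noteq> 0 \<Longrightarrow> b \<noteq> 0 \<Longrightarrow> c \<noteq> 0 \<Longrightarrow> \<exists>a' b' c'. a' \<noteq> 0 \<and> b' \<noteq> 0 \<and> c' \<noteq> 0 \<and> f (scl a b c s) = scl a' b' c' (f s)"
  shows "lift f (pt r) = pt (f r)"
proof -
  have "(SOME s. s \<in> pt r) \<in> pt r" using in_pt by (metis someI)
  then obtain a b c where "a \<noteq> 0" "b \<noteq> 0" "c \<noteq> 0" "(SOME s. s \<in> pt r) = scl a b c r"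
    by (auto simp: pt_def proj_eq_def)
  then show ?thesis using assms[of a b c r] by (auto simp: lift_def pt_scl)
qed



lemma pf_U1: "poly_fun cU1"
proof -
  have "cU1 = (\<lambda>((u1,v1),(u2,v2),(x,y,z,t,w)). u1)" by (auto simp: fun_eq_iff cdefs split: prod.splits)
  then show ?thesis using poly_fun.cu1 by simp
qed
lemma pf_V1: "poly_fun cV1"
proof -
  have "cV1 = (\<lambda>((u1,v1),(u2,v2),(x,y,z,t,w)). v1)" by (auto simp: fun_eq_iff cdefs split: prod.splits)
  then show ?thesis using poly_fun.cv1 by simp
qed
lemma pf_U2: "poly_fun cU2"
proof -
  have "cU2 = (\<lambda>((u1,v1),(u2,v2),(x,y,z,t,w)). u2)" by (auto simp: fun_eq_iff cdefs split: prod.splits)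
  then show ?thesis using poly_fun.cu2 by simp
qed
lemma pf_V2: "poly_fun cV2"
proof -
  have "cV2 = (\<lambda>((u1,v1),(u2,v2),(x,y,z,t,w)). v2)" by (auto simp: fun_eq_iff cdefs split: prod.splits)
  then show ?thesis using poly_fun.cv2 by simp
qed
lemma pf_X: "poly_fun cX"
proof -
  have "cX = (\<lambda>((u1,v1),(u2,v2),(x,y,z,t,w)). x)" by (auto simp: fun_eq_iff cdefs split: prod.splits)
  then show ?thesis using poly_fun.cx by simp
qed
lemma pf_Y: "poly_fun cY"
proof -
  have "cY = (\<lambda>((u1,v1),(u2,v2),(x,y,z,t,w)). y)" by (auto simp: fun_eq_iff cdefs split: prod.splits)
  then show ?thesis using poly_fun.cy by simp
qed
lemma pf_Z: "poly_fun cZ"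
proof -
  have "cZ = (\<lambda>((u1,v1),(u2,v2),(x,y,z,t,w)). z)" by (auto simp: fun_eq_iff cdefs split: prod.splits)
  then show ?thesis using poly_fun.cz by simp
qed
lemma pf_T: "poly_fun cT"
proof -
  have "cT = (\<lambda>((u1,v1),(u2,v2),(x,y,z,t,w)). t)" by (auto simp: fun_eq_iff cdefs split: prod.splits)
  then show ?thesis using poly_fun.ct by simp
qed
lemma pf_W: "poly_fun cW"
proof -
  have "cW = (\<lambda>((u1,v1),(u2,v2),(x,y,z,t,w)). w)" by (auto simp: fun_eq_iff cdefs split: prod.splits)
  then show ?thesis using poly_fun.cw by simp
qed

lemma pf_sub: "poly_fun f \<Longrightarrow> poly_fun g \<Longrightarrow> poly_fun (\<lambda>r. f r - g r)"
proof -
  assume "poly_fun f" "poly_fun g"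
  have "poly_fun (\<lambda>r. (\<lambda>_. -1) r * g r)" by (rule poly_fun.mult[OF poly_fun.const \<open>poly_fun g\<close>])
  then have "poly_fun (\<lambda>r. f r + (\<lambda>r. (\<lambda>_. -1) r * g r) r)" using poly_fun.add[OF \<open>poly_fun f\<close>] by blast
  then show ?thesis by simp
qed

lemmas pf_intros = pf_U1 pf_V1 pf_U2 pf_V2 pf_X pf_Y pf_Z pf_T pf_W poly_fun.const poly_fun.add poly_fun.mult pf_sub

lemma mhomI: "poly_fun f \<Longrightarrow> (\<And>a b c r. f (scl a b c r) = a^da*b^db*c^dc*f r) \<Longrightarrow> mhom_poly f"
  unfolding mhom_poly_def by blast

lemma mhom_scl0: "mhom_poly f \<Longrightarrow> a \<noteq> 0 \<Longrightarrow> b \<noteq> 0 \<Longrightarrow> c \<noteq> 0 \<Longrightarrow> f (scl a b c r) = 0 \<longleftrightarrow> f r = 0"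
proof -
  assume "mhom_poly f" "a \<noteq> 0" "b \<noteq> 0" "c \<noteq> 0"
  then obtain d1 d2 d3 where "\<And>a b c r. f (scl a b c r) = a^d1*b^d2*c^d3*f r"
    unfolding mhom_poly_def by metis
  then show ?thesis using \<open>a \<noteq> 0\<close> \<open>b \<noteq> 0\<close> \<open>c \<noteq> 0\<close> by simp
qed

lemma mhom_mult: "mhom_poly f \<Longrightarrow> mhom_poly g \<Longrightarrow> mhom_poly (\<lambda>r. f r * g r)"
proof -
  assume f: "mhom_poly f" and g: "mhom_poly g"
  then obtain d1 d2 d3 e1 e2 e3 where
    hf: "\<And>a b c r. f (scl a b c r) = a^d1*b^d2*c^d3*f r" and
    hg: "\<And>a b c r. g (scl a b c r) = a^e1*b^e2*c^e3*g r"
    unfolding mhom_poly_def by metis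
  show ?thesis
  proof (rule mhomI[where da="d1+e1" and db="d2+e2" and dc="d3+e3"])
    show "poly_fun (\<lambda>r. f r * g r)" using f g unfolding mhom_poly_def by (simp add: poly_fun.mult)
  qed (simp add: hf hg power_add algebra_simps)
qed

lemma mhom_one: "mhom_poly (\<lambda>_. 1)"
  by (rule mhomI[where da=0 and db=0 and dc=0]) (simp_all add: poly_fun.const)

definition zs :: "(rep \<Rightarrow> complex) set \<Rightarrow> rep set set" where
  "zs F = {P \<in> PP. \<forall>r\<in>P. \<forall>f\<in>F. f r = 0}"

definition "mh F \<longleftrightarrow> (\<forall>f\<in>F. mhom_poly f)"

lemma zs_pt: "mh F \<Longrightarrow> pt r \<in> zs F \<longleftrightarrow> valid r \<and> (\<forall>f\<in>F. f r = 0)"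
  unfolding zs_def
  by (subst zero_set_pt[unfolded zero_set_def, of "\<lambda>s. \<forall>f\<in>F. f s = 0"]) (auto simp: mh_def mhom_scl0)

lemma zs_PP: "zs F \<subseteq> PP" by (auto simp: zs_def)

lemma zclosed_iff: "zclosed S \<longleftrightarrow> (\<exists>F. mh F \<and> S = zs F)"
  by (simp add: zclosed_def zs_def mh_def)

lemma zclosed_zs: "mh F \<Longrightarrow> zclosed (zs F)" by (auto simp: zclosed_iff)

lemma zclosed_Int: "zclosed A \<Longrightarrow> zclosed B \<Longrightarrow> zclosed (A \<inter> B)"
proof -
  assume "zclosed A" "zclosed B"
  then obtain F G where "mh F" "A = zs F" "mh G" "B = zs G" by (auto simp: zclosed_iff)
  then have "A \<inter> B = zs (F \<union> G)" "mh (F \<union> G)" by (auto simp: zs_def mh_def)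
  then show ?thesis by (simp add: zclosed_zs)
qed

lemma zclosed_Un: "zclosed A \<Longrightarrow> zclosed B \<Longrightarrow> zclosed (A \<union> B)"
proof -
  assume "zclosed A" "zclosed B"
  then obtain F G where F: "mh F" "A = zs F" and G: "mh G" "B = zs G" by (auto simp: zclosed_iff)
  define H where "H = {h. \<exists>f\<in>F. \<exists>g\<in>G. h = (\<lambda>r. f r * g r)}"
  have mH: "mh H" using F G by (auto simp: H_def mh_def intro: mhom_mult)
  have "A \<union> B = zs H"
  proof (rule set_eqI)
    fix P
    show "P \<in> A \<union> B \<longleftrightarrow> P \<in> zs H"
    proof (cases "P \<in> PP")
      case False then show ?thesis using F G zs_PP by auto
    next
      case True
      then obtain r where r: "valid r" "P = pt r" by (rule PP_E)
      have a: "P \<in> A \<longleftrightarrow> (\<forall>f\<in>F. f r = 0)" using r F zs_pt[OF F(1)] by simp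
      have b: "P \<in> B \<longleftrightarrow> (\<forall>f\<in>G. f r = 0)" using r G zs_pt[OF G(1)] by simp
      have c0: "P \<in> zs H \<longleftrightarrow> (\<forall>h\<in>H. h r = 0)" using r zs_pt[OF mH] by simp
      have c1: "(\<forall>h\<in>H. h r = 0) \<longleftrightarrow> (\<forall>f\<in>F. \<forall>g\<in>G. f r * g r = 0)"
        unfolding H_def by fastforce
      note c = c0[unfolded c1]
      show ?thesis unfolding Un_iff a b c by auto
    qed
  qed
  then show ?thesis using mH by (simp add: zclosed_zs)
qed

lemma zclosed_empty: "zclosed {}"
proof -
  have "{} = zs {\<lambda>_. 1}"
  proof (rule sym, rule equals0I)
    fix P assume "P \<in> zs {\<lambda>_. 1}"
    then have "P \<in> PP" "\<forall>r\<in>P. (1::complex) = 0" by (auto simp: zs_def)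
    then obtain r where "P = pt r" by (auto elim!: PP_E)
    then have "r \<in> P" using in_pt by simp
    from bspec[OF \<open>\<forall>r\<in>P. (1::complex) = 0\<close> this] show False by simp
  qed
  then show ?thesis using zclosed_zs[of "{\<lambda>_. 1}"] mhom_one by (simp add: mh_def)
qed

definition cl :: "rep set set \<Rightarrow> rep set set" where
  "cl S = zs {f. mhom_poly f \<and> (\<forall>Q\<in>S. \<forall>s\<in>Q. f s = 0)}"

lemma zclosed_cl: "zclosed (cl S)" unfolding cl_def by (rule zclosed_zs) (simp add: mh_def)

lemma cl_sub: "S \<subseteq> PP \<Longrightarrow> S \<subseteq> cl S" unfolding cl_def zs_def by blast

lemma cl_min: "zclosed C \<Longrightarrow> S \<subseteq> C \<Longrightarrow> cl S \<subseteq> C"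
proof -
  assume "zclosed C" "S \<subseteq> C"
  then obtain F where F: "mh F" "C = zs F" by (auto simp: zclosed_iff)
  then have "F \<subseteq> {f. mhom_poly f \<and> (\<forall>Q\<in>S. \<forall>s\<in>Q. f s = 0)}" using \<open>S \<subseteq> C\<close>
    by (auto simp: mh_def zs_def)
  then show ?thesis using F by (auto simp: cl_def zs_def)
qed



definition crd :: "nat \<Rightarrow> rep \<Rightarrow> complex" where
  "crd i r = [cU1 r, cV1 r, cU2 r, cV2 r, cX r, cY r, cZ r, cT r, cW r] ! i"
definition blk :: "nat \<Rightarrow> nat" where
  "blk i = (if i < 2 then 0 else if i < 4 then 1 else 2)"
definition sc :: "nat \<Rightarrow> complex \<Rightarrow> complex \<Rightarrow> complex \<Rightarrow> complex" where
  "sc k a b c = (if k = 0 then a else if k = 1 then b else c)"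

lemma less9: "i < (9::nat) \<Longrightarrow> i = 0 \<or> i = 1 \<or> i = 2 \<or> i = 3 \<or> i = 4 \<or> i = 5 \<or> i = 6 \<or> i = 7 \<or> i = 8"
  by auto

lemma crd_simps[simp]: "crd 0 r = cU1 r" "crd 1 r = cV1 r" "crd 2 r = cU2 r" "crd 3 r = cV2 r"
  "crd 4 r = cX r" "crd 5 r = cY r" "crd 6 r = cZ r" "crd 7 r = cT r" "crd 8 r = cW r"
  by (simp_all add: crd_def numeral_eq_Suc)

lemma crd_Suc0[simp]: "crd (Suc 0) r = cV1 r" by (simp add: crd_def)
lemma blk_Suc0[simp]: "blk (Suc 0) = 0" by (simp add: blk_def)

lemma crd_fun: "crd 0 = cU1" "crd (Suc 0) = cV1" "crd 2 = cU2" "crd 3 = cV2"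
  "crd 4 = cX" "crd 5 = cY" "crd 6 = cZ" "crd 7 = cT" "crd 8 = cW"
  by (simp_all add: fun_eq_iff)

lemma blk_simps[simp]: "blk 0 = 0" "blk 1 = 0" "blk 2 = 1" "blk 3 = 1" "blk 4 = 2" "blk 5 = 2"
  "blk 6 = 2" "blk 7 = 2" "blk 8 = 2"
  by (simp_all add: blk_def)

lemma crd_scl: "i < 9 \<Longrightarrow> crd i (scl a b c r) = sc (blk i) a b c * crd i r"
  by (drule less9) (auto simp: sc_def)

lemma pf_crd: "i < 9 \<Longrightarrow> poly_fun (crd i)"
  by (drule less9) (auto simp: crd_fun intro: pf_intros)

lemma crd_ext: "(\<And>i. i < 9 \<Longrightarrow> crd i r = crd i s) \<Longrightarrow> r = s"
proof -
  assume h: "\<And>i. i < 9 \<Longrightarrow> crd i r = crd i s"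
  show ?thesis by (rule rep_ext; insert h[of 0] h[of "Suc 0"] h[of 2] h[of 3] h[of 4] h[of 5] h[of 6] h[of 7] h[of 8]; simp)
qed

lemma wit: "i < 9 \<Longrightarrow> blk i = k \<Longrightarrow> crd i r \<noteq> 0 \<Longrightarrow> \<exists>i<9. blk i = k \<and> crd i r \<noteq> 0" by blast

lemma valid_crd: "valid r \<Longrightarrow> k < 3 \<Longrightarrow> \<exists>i<9. blk i = k \<and> crd i r \<noteq> 0"
proof -
  assume v: "valid r" and k: "k < 3"
  have "k = 0 \<or> k = 1 \<or> k = 2" using k by auto
  then show ?thesis
  proof (elim disjE)
    assume "k = 0" then show ?thesis using v unfolding valid_c
      using wit[of 0 k r] wit[of "Suc 0" k r] by auto
  next
    assume "k = 1" then show ?thesis using v unfolding valid_c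
      using wit[of 2 k r] wit[of 3 k r] by auto
  next
    assume "k = 2" then show ?thesis using v unfolding valid_c
      using wit[of 4 k r] wit[of 5 k r] wit[of 6 k r] wit[of 7 k r] wit[of 8 k r] by auto
  qed
qed



definition minor :: "rep \<Rightarrow> nat \<Rightarrow> nat \<Rightarrow> rep \<Rightarrow> complex" where
  "minor r0 i j = (\<lambda>s. crd i s * crd j r0 - crd j s * crd i r0)"

lemma blk_lt: "i < 9 \<Longrightarrow> blk i = 0 \<or> blk i = 1 \<or> blk i = 2"
  by (auto simp: blk_def)

lemma mhom_minor: assumes "i < 9" "j < 9" "blk i = blk j" shows "mhom_poly (minor r0 i j)"
proof (rule mhomI[where da="if blk i = 0 then 1 else 0" and db="if blk i = 1 then 1 else 0"
      and dc="if blk i = 2 then 1 else 0"])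
  show "poly_fun (minor r0 i j)" unfolding minor_def using assms by (intro pf_intros pf_crd)
next
  fix a b c r
  have "minor r0 i j (scl a b c r) = sc (blk i) a b c * minor r0 i j r"
    using assms by (simp add: minor_def crd_scl algebra_simps)
  moreover have "sc (blk i) a b c = a ^ (if blk i = 0 then 1 else 0) * b ^ (if blk i = 1 then 1 else 0) *
       c ^ (if blk i = 2 then 1 else 0)"
    using blk_lt[OF assms(1)] by (auto simp: sc_def)
  ultimately show "minor r0 i j (scl a b c r) = a ^ (if blk i = 0 then 1 else 0) * b ^ (if blk i = 1 then 1 else 0) *
       c ^ (if blk i = 2 then 1 else 0) * minor r0 i j r" by simp
qed

definition Mins :: "rep \<Rightarrow> (rep \<Rightarrow> complex) set" where
  "Mins r0 = {f. \<exists>i j. i < 9 \<and> j < 9 \<and> blk i = blk j \<and> f = minor r0 i j}"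

lemma mh_Mins: "mh (Mins r0)" by (auto simp: mh_def Mins_def intro: mhom_minor)

lemma prop_vec:
  fixes X p :: "nat \<Rightarrow> complex"
  assumes "\<forall>i\<in>I. \<forall>j\<in>I. X i * p j = X j * p i" "ja \<in> I" "p ja \<noteq> 0" "ia \<in> I" "X ia \<noteq> 0"
  shows "\<exists>k. k \<noteq> 0 \<and> (\<forall>i\<in>I. X i = k * p i)"
proof -
  define k where "k = X ja / p ja"
  have eq: "\<forall>i\<in>I. X i = k * p i"
  proof
    fix i assume "i \<in> I"
    then have "X i * p ja = X ja * p i" using assms by blast
    then show "X i = k * p i" using assms(3) unfolding k_def by (simp add: field_simps)
  qed
  have "k \<noteq> 0"
  proof
    assume "k = 0" then have "X ia = 0" using eq assms(4) by simp
    then show False using assms(5) by simp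
  qed
  then show ?thesis using eq by blast
qed

lemma singleton_zs: assumes v: "valid r0" shows "{pt r0} = zs (Mins r0)"
proof (rule set_eqI)
  fix P
  show "P \<in> {pt r0} \<longleftrightarrow> P \<in> zs (Mins r0)"
  proof
    assume "P \<in> {pt r0}"
    then have "P = pt r0" by simp
    moreover have "\<forall>f\<in>Mins r0. f r0 = 0" by (auto simp: Mins_def minor_def)
    ultimately show "P \<in> zs (Mins r0)" using v zs_pt[OF mh_Mins] by simp
  next
    assume P: "P \<in> zs (Mins r0)"
    have "P \<in> PP" using P zs_PP by blast
    then obtain s where s: "valid s" "P = pt s" by (rule PP_E)
    then have m: "\<forall>i<9. \<forall>j<9. blk i = blk j \<longrightarrow> crd i s * crd j r0 = crd j s * crd i r0"
    proof (intro allI impI)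
      fix i j assume ij: "i < 9" "j < 9" "blk i = blk j"
      have "\<forall>f\<in>Mins r0. f s = 0" using P s zs_pt[OF mh_Mins] by simp
      moreover have "minor r0 i j \<in> Mins r0" using ij by (auto simp: Mins_def)
      ultimately have "minor r0 i j s = 0" by blast
      then show "crd i s * crd j r0 = crd j s * crd i r0" by (simp add: minor_def)
    qed
    have kk: "\<exists>k. k \<noteq> 0 \<and> (\<forall>i\<in>{i. i<9 \<and> blk i = b}. crd i s = k * crd i r0)" if "b < 3" for b
    proof -
      obtain j0 where j0: "j0 < 9" "blk j0 = b" "crd j0 r0 \<noteq> 0" using valid_crd[OF v \<open>b<3\<close>] by blast
      obtain i0 where i0: "i0 < 9" "blk i0 = b" "crd i0 s \<noteq> 0" using valid_crd[OF s(1) \<open>b<3\<close>] by blast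
      show ?thesis
        by (rule prop_vec[where ja=j0 and ia=i0]) (use m j0 i0 in auto)
    qed
    obtain k0 where k0: "k0 \<noteq> 0" "\<forall>i::nat. i<9 \<and> blk i = 0 \<longrightarrow> crd i s = k0 * crd i r0" using kk[of 0] by auto
    obtain k1 where k1: "k1 \<noteq> 0" "\<forall>i::nat. i<9 \<and> blk i = 1 \<longrightarrow> crd i s = k1 * crd i r0" using kk[of 1] by auto
    obtain k2 where k2: "k2 \<noteq> 0" "\<forall>i::nat. i<9 \<and> blk i = 2 \<longrightarrow> crd i s = k2 * crd i r0" using kk[of 2] by auto
    have "s = scl k0 k1 k2 r0"
    proof (rule crd_ext)
      fix i :: nat assume "i < 9"
      then show "crd i s = crd i (scl k0 k1 k2 r0)"
        using blk_lt[OF \<open>i<9\<close>] k0 k1 k2 by (auto simp: crd_scl sc_def)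
    qed
    then show "P \<in> {pt r0}" using s k0 k1 k2 by (simp add: pt_scl)
  qed
qed

lemma zclosed_single: "valid r0 \<Longrightarrow> zclosed {pt r0}"
  using singleton_zs zclosed_zs mh_Mins by metis

lemma zclosed_single': "P \<in> PP \<Longrightarrow> zclosed {P}"
  by (auto elim!: PP_E intro: zclosed_single)

lemma zclosed_finite: "finite S \<Longrightarrow> S \<subseteq> PP \<Longrightarrow> zclosed S"
proof (induction S rule: finite_induct)
  case empty then show ?case by (simp add: zclosed_empty)
next
  case (insert P S)
  then have "zclosed ({P} \<union> S)" by (intro zclosed_Un zclosed_single') auto
  then show ?case by simp
qed

lemma zirr_single: "P \<in> PP \<Longrightarrow> zirreducible {P}"
  unfolding zirreducible_def using zclosed_single'
  by (metis Un_empty insert_not_empty subset_singletonD sup_ge1 sup_ge2)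

lemma zclosed_PP: "zclosed S \<Longrightarrow> S \<subseteq> PP" by (auto simp: zclosed_iff zs_def)

lemma finite_irr_single: assumes "zirreducible W" "finite W" shows "\<exists>P. W = {P}"
proof -
  obtain P where P: "P \<in> W" using assms(1) by (auto simp: zirreducible_def)
  have sub: "W \<subseteq> PP" using assms(1) zclosed_PP by (auto simp: zirreducible_def)
  have "W = {P} \<union> (W - {P})" using P by auto
  moreover have "zclosed {P}" "zclosed (W - {P})" using sub P assms(2)
    by (auto intro: zclosed_single' zclosed_finite)
  ultimately have "W = {P} \<or> W = W - {P}" using assms(1) unfolding zirreducible_def by metis
  then show ?thesis using P by auto
qed



lemma lam_c: "(\<lambda>((u1,v1),(u2,v2),(x,y,z,t,w)). u1) = cU1"
  "(\<lambda>((u1,v1),(u2,v2),(x,y,z,t,w)). v1) = cV1"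
  "(\<lambda>((u1,v1),(u2,v2),(x,y,z,t,w)). u2) = cU2"
  "(\<lambda>((u1,v1),(u2,v2),(x,y,z,t,w)). v2) = cV2"
  "(\<lambda>((u1,v1),(u2,v2),(x,y,z,t,w)). x) = cX"
  "(\<lambda>((u1,v1),(u2,v2),(x,y,z,t,w)). y) = cY"
  "(\<lambda>((u1,v1),(u2,v2),(x,y,z,t,w)). z) = cZ"
  "(\<lambda>((u1,v1),(u2,v2),(x,y,z,t,w)). t) = cT"
  "(\<lambda>((u1,v1),(u2,v2),(x,y,z,t,w)). w) = cW"
  by (auto simp: fun_eq_iff cdefs split: prod.splits)

lemma case_c:
  "(case r of ((u1,v1),(u2,v2),(x,y,z,t,w)) \<Rightarrow> u1) = cU1 r"
  "(case r of ((u1,v1),(u2,v2),(x,y,z,t,w)) \<Rightarrow> v1) = cV1 r"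
  "(case r of ((u1,v1),(u2,v2),(x,y,z,t,w)) \<Rightarrow> u2) = cU2 r"
  "(case r of ((u1,v1),(u2,v2),(x,y,z,t,w)) \<Rightarrow> v2) = cV2 r"
  "(case r of ((u1,v1),(u2,v2),(x,y,z,t,w)) \<Rightarrow> x) = cX r"
  "(case r of ((u1,v1),(u2,v2),(x,y,z,t,w)) \<Rightarrow> y) = cY r"
  "(case r of ((u1,v1),(u2,v2),(x,y,z,t,w)) \<Rightarrow> z) = cZ r"
  "(case r of ((u1,v1),(u2,v2),(x,y,z,t,w)) \<Rightarrow> t) = cT r"
  "(case r of ((u1,v1),(u2,v2),(x,y,z,t,w)) \<Rightarrow> w) = cW r"
  by (simp_all add: cdefs split: prod.splits)

lemma pullback:
  assumes "poly_fun f" "\<forall>i<9. \<exists>p. \<forall>s. crd i (\<psi> s) = poly p s"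
  shows "\<exists>q. \<forall>s. f (\<psi> s) = poly q s"
  using assms(1)
proof (induction rule: poly_fun.induct)
  case (const c) then show ?case by (intro exI[of _ "[:c:]"]) simp
next
  case cu1 
  obtain p where "\<forall>s. crd (0) (\<psi> s) = poly p s" using assms(2)[rule_format, of "0"] by force
  then show ?case by (intro exI[of _ p]) (simp add: case_prod_beta cdefs)
next
  case cv1
  obtain p where "\<forall>s. crd (Suc 0) (\<psi> s) = poly p s" using assms(2)[rule_format, of "Suc 0"] by force
  then show ?case by (intro exI[of _ p]) (simp add: case_prod_beta cdefs)
next
  case cu2
  obtain p where "\<forall>s. crd (2) (\<psi> s) = poly p s" using assms(2)[rule_format, of "2"] by force
  then show ?case by (intro exI[of _ p]) (simp add: case_prod_beta cdefs)
next
  case cv2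
  obtain p where "\<forall>s. crd (3) (\<psi> s) = poly p s" using assms(2)[rule_format, of "3"] by force
  then show ?case by (intro exI[of _ p]) (simp add: case_prod_beta cdefs)
next
  case cx
  obtain p where "\<forall>s. crd (4) (\<psi> s) = poly p s" using assms(2)[rule_format, of "4"] by force
  then show ?case by (intro exI[of _ p]) (simp add: case_prod_beta cdefs)
next
  case cy
  obtain p where "\<forall>s. crd (5) (\<psi> s) = poly p s" using assms(2)[rule_format, of "5"] by force
  then show ?case by (intro exI[of _ p]) (simp add: case_prod_beta cdefs)
next
  case cz
  obtain p where "\<forall>s. crd (6) (\<psi> s) = poly p s" using assms(2)[rule_format, of "6"] by force
  then show ?case by (intro exI[of _ p]) (simp add: case_prod_beta cdefs)
next
  case ct
  obtain p where "\<forall>s. crd (7) (\<psi> s) = poly p s" using assms(2)[rule_format, of "7"] by force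
  then show ?case by (intro exI[of _ p]) (simp add: case_prod_beta cdefs)
next
  case cw
  obtain p where "\<forall>s. crd (8) (\<psi> s) = poly p s" using assms(2)[rule_format, of "8"] by force
  then show ?case by (intro exI[of _ p]) (simp add: case_prod_beta cdefs)
next
  case (add f g)
  then obtain p q where "\<forall>s. f (\<psi> s) = poly p s" "\<forall>s. g (\<psi> s) = poly q s" by blast
  then show ?case by (intro exI[of _ "p + q"]) simp
next
  case (mult f g)
  then obtain p q where "\<forall>s. f (\<psi> s) = poly p s" "\<forall>s. g (\<psi> s) = poly q s" by blast
  then show ?case by (intro exI[of _ "p * q"]) simp
qed
lemma vanish_pt: "mhom_poly f \<Longrightarrow> (\<forall>x\<in>pt r. f x = 0) \<longleftrightarrow> f r = 0"
proof
  assume "\<forall>x\<in>pt r. f x = 0" then show "f r = 0" using in_pt by blast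
next
  assume "mhom_poly f" "f r = 0"
  show "\<forall>x\<in>pt r. f x = 0"
  proof
    fix x assume "x \<in> pt r"
    then obtain a b c where "a \<noteq> 0" "b \<noteq> 0" "c \<noteq> 0" "x = scl a b c r"
      unfolding pt_def proj_eq_def by blast
    then show "f x = 0" using mhom_scl0[OF \<open>mhom_poly f\<close>] \<open>f r = 0\<close> by simp
  qed
qed

lemma poly_nonzero_avoid:
  fixes p q :: "complex poly"
  assumes "p \<noteq> 0" "q \<noteq> 0"
  shows "\<exists>s. s \<noteq> 0 \<and> poly p s \<noteq> 0 \<and> poly q s \<noteq> 0"
proof -
  have f1: "finite {s. poly p s = 0}" by (rule poly_roots_finite[OF assms(1)])
  have f2: "finite {s. poly q s = 0}" by (rule poly_roots_finite[OF assms(2)])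
  have fin: "finite (insert 0 ({s. poly p s = 0} \<union> {s. poly q s = 0}))" using f1 f2 by simp
  obtain s where "s \<notin> insert 0 ({s. poly p s = 0} \<union> {s. poly q s = 0})"
    using ex_new_if_finite[OF infinite_UNIV_char_0 fin] by blast
  then show ?thesis by blast
qed

lemma orbit_irr:
  assumes pc: "\<forall>i<9. \<exists>p. \<forall>s. crd i (\<psi> s) = poly p s"
    and vd: "\<And>s. s \<noteq> 0 \<Longrightarrow> valid (\<psi> s)"
    and S: "S = (\<lambda>s. pt (\<psi> s)) ` (-{0})"
  shows "zirreducible (cl S)"
proof -
  have SPP: "S \<subseteq> PP" unfolding S using vd PP_iff by blast
  have Ssub: "S \<subseteq> cl S" using cl_sub[OF SPP] .
  have "pt (\<psi> 1) \<in> S" unfolding S by simp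
  then have ne: "cl S \<noteq> {}" using Ssub by auto
  have split: "S \<subseteq> A \<or> S \<subseteq> B" if A: "zclosed A" and B: "zclosed B" and eq: "cl S = A \<union> B" for A B
  proof (rule ccontr)
    assume "\<not> (S \<subseteq> A \<or> S \<subseteq> B)"
    then obtain s1 s2 where s1: "s1 \<noteq> 0" "pt (\<psi> s1) \<notin> A" and s2: "s2 \<noteq> 0" "pt (\<psi> s2) \<notin> B"
      unfolding S by blast
    obtain FA FB where FA: "mh FA" "A = zs FA" and FB: "mh FB" "B = zs FB"
      using A B by (auto simp: zclosed_iff)
    have "\<not> (\<forall>f\<in>FA. f (\<psi> s1) = 0)" using s1(2) FA(2) zs_pt[OF FA(1)] vd[OF s1(1)] by simp
    then obtain f1 where f1: "f1 \<in> FA" "f1 (\<psi> s1) \<noteq> 0" by blast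
    have "\<not> (\<forall>f\<in>FB. f (\<psi> s2) = 0)" using s2(2) FB(2) zs_pt[OF FB(1)] vd[OF s2(1)] by simp
    then obtain f2 where f2: "f2 \<in> FB" "f2 (\<psi> s2) \<noteq> 0" by blast
    have pf1: "poly_fun f1" using FA f1 by (auto simp: mh_def mhom_poly_def)
    have pf2: "poly_fun f2" using FB f2 by (auto simp: mh_def mhom_poly_def)
    obtain q1 where q1: "\<forall>s. f1 (\<psi> s) = poly q1 s" using pullback[OF pf1 pc] by blast
    obtain q2 where q2: "\<forall>s. f2 (\<psi> s) = poly q2 s" using pullback[OF pf2 pc] by blast
    have "q1 \<noteq> 0" using q1 f1 by auto
    moreover have "q2 \<noteq> 0" using q2 f2 by auto
    ultimately obtain s where s: "s \<noteq> 0" "poly q1 s \<noteq> 0" "poly q2 s \<noteq> 0"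
      using poly_nonzero_avoid by blast
    have "pt (\<psi> s) \<in> S" using s S by blast
    then have "pt (\<psi> s) \<in> A \<union> B" using Ssub eq by blast
    moreover have "f1 (\<psi> s) \<noteq> 0" using s q1 by simp
    then have "pt (\<psi> s) \<notin> A" using f1 FA(2) zs_pt[OF FA(1)] by blast
    moreover have "f2 (\<psi> s) \<noteq> 0" using s q2 by simp
    then have "pt (\<psi> s) \<notin> B" using f2 FB(2) zs_pt[OF FB(1)] by blast
    ultimately show False by blast
  qed
  show ?thesis unfolding zirreducible_def
  proof (intro conjI allI impI)
    show "zclosed (cl S)" by (rule zclosed_cl)
    show "cl S \<noteq> {}" by (rule ne)
  next
    fix A B assume h: "zclosed A \<and> zclosed B \<and> cl S = A \<union> B"
    then have "S \<subseteq> A \<or> S \<subseteq> B" using split by blast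
    then show "cl S = A \<or> cl S = B" using h cl_min by blast
  qed
qed


definition van :: "(rep \<Rightarrow> complex) \<Rightarrow> rep set \<Rightarrow> bool" where
  "van f Q \<longleftrightarrow> (\<forall>x\<in>Q. f x = 0)"

lemma curve_van:
  assumes pc1: "\<forall>i<9. \<exists>p. \<forall>s. crd i (\<psi>1 s) = poly p s"
    and pc2: "\<forall>i<9. \<exists>p. \<forall>s. crd i (\<psi>2 s) = poly p s"
    and ch: "\<And>s. s \<noteq> 0 \<Longrightarrow> pt (\<psi>2 s) = pt (\<psi>1 (1/s))"
    and K: "K = range (\<lambda>s. pt (\<psi>1 s)) \<union> range (\<lambda>s. pt (\<psi>2 s))"
    and f: "mhom_poly f"
  shows "(\<forall>Q\<in>K. van f Q) \<or> finite {Q\<in>K. van f Q}"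
proof -
  have pf: "poly_fun f" using f by (simp add: mhom_poly_def)
  obtain q1 where q1: "\<forall>s. f (\<psi>1 s) = poly q1 s" using pullback[OF pf pc1] by blast
  obtain q2 where q2: "\<forall>s. f (\<psi>2 s) = poly q2 s" using pullback[OF pf pc2] by blast
  have v1: "van f (pt (\<psi>1 s)) \<longleftrightarrow> poly q1 s = 0" for s
    unfolding van_def vanish_pt[OF f] using q1 by simp
  have v2: "van f (pt (\<psi>2 s)) \<longleftrightarrow> poly q2 s = 0" for s
    unfolding van_def vanish_pt[OF f] using q2 by simp
  show ?thesis
  proof (cases "q1 = 0")
    case False
    have "{Q\<in>K. van f Q} \<subseteq> (\<lambda>s. pt (\<psi>1 s)) ` {s. poly q1 s = 0} \<union> {pt (\<psi>2 0)}"
    proof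
      fix Q assume Q: "Q \<in> {Q\<in>K. van f Q}"
      then have "Q \<in> K" "van f Q" by auto
      then consider s where "Q = pt (\<psi>1 s)" | s where "Q = pt (\<psi>2 s)" using K by blast
      then show "Q \<in> (\<lambda>s. pt (\<psi>1 s)) ` {s. poly q1 s = 0} \<union> {pt (\<psi>2 0)}"
      proof cases
        case (1 s) then show ?thesis using v1 \<open>van f Q\<close> by blast
      next
        case (2 s)
        show ?thesis
        proof (cases "s = 0")
          case True then show ?thesis using 2 by simp
        next
          case False
          then have "Q = pt (\<psi>1 (1/s))" using 2 ch by simp
          then show ?thesis using v1 \<open>van f Q\<close> by blast
        qed
      qed
    qed
    moreover have "finite {s. poly q1 s = 0}" using poly_roots_finite False by blast
    ultimately have "finite {Q\<in>K. van f Q}" by (meson finite.emptyI finite.insertI finite_UnI finite_imageI finite_subset)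
    then show ?thesis by blast
  next
    case True
    then have a1: "van f (pt (\<psi>1 s))" for s using v1 by simp
    have "poly q2 s = 0" if "s \<noteq> 0" for s
    proof -
      have "van f (pt (\<psi>2 s))" using a1[of "1/s"] ch[OF that] by simp
      then show ?thesis using v2 by blast
    qed
    then have "{s. s \<noteq> 0} \<subseteq> {s. poly q2 s = 0}" by blast
    moreover have "infinite {s::complex. s \<noteq> 0}"
    proof
      assume "finite {s::complex. s \<noteq> 0}"
      then have "finite (insert 0 {s::complex. s \<noteq> 0})" by simp
      moreover have "insert 0 {s::complex. s \<noteq> 0} = UNIV" by auto
      ultimately show False using infinite_UNIV_char_0[where 'a=complex] by simp
    qed
    ultimately have "infinite {s. poly q2 s = 0}" using finite_subset by blast
    then have "q2 = 0" using poly_roots_finite by blast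
    then have a2: "van f (pt (\<psi>2 s))" for s using v2 by simp
    have "\<forall>Q\<in>K. van f Q" using a1 a2 K by blast
    then show ?thesis by blast
  qed
qed

lemma curve_lemma:
  assumes pc1: "\<forall>i<9. \<exists>p. \<forall>s. crd i (\<psi>1 s) = poly p s"
    and pc2: "\<forall>i<9. \<exists>p. \<forall>s. crd i (\<psi>2 s) = poly p s"
    and vd1: "\<And>s. valid (\<psi>1 s)" and vd2: "\<And>s. valid (\<psi>2 s)"
    and ch: "\<And>s. s \<noteq> 0 \<Longrightarrow> pt (\<psi>2 s) = pt (\<psi>1 (1/s))"
    and K: "K = range (\<lambda>s. pt (\<psi>1 s)) \<union> range (\<lambda>s. pt (\<psi>2 s))"
    and cK: "zclosed K" and inf: "infinite K"
  shows "\<And>A. zclosed A \<Longrightarrow> A \<subseteq> K \<Longrightarrow> A \<noteq> K \<Longrightarrow> finite A"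
    and "irred_curve K"
proof -
  have KPP: "K \<subseteq> PP" using cK zclosed_PP by blast
  show fin: "finite A" if A: "zclosed A" "A \<subseteq> K" "A \<noteq> K" for A
  proof -
    obtain F where F: "mh F" "A = zs F" using A(1) by (auto simp: zclosed_iff)
    obtain Q where Q: "Q \<in> K" "Q \<notin> A" using A by blast
    obtain r where r: "valid r" "Q = pt r" using Q KPP by (blast elim: PP_E)
    have "\<not> (\<forall>f\<in>F. f r = 0)" using Q r F zs_pt[OF F(1)] by simp
    then obtain f where f: "f \<in> F" "f r \<noteq> 0" by blast
    have mf: "mhom_poly f" using F f by (simp add: mh_def)
    have "\<not> van f Q" using f r vanish_pt[OF mf] by (simp add: van_def)
    then have "finite {Q\<in>K. van f Q}" using curve_van[OF pc1 pc2 ch K mf] Q by blast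
    moreover have "A \<subseteq> {Q\<in>K. van f Q}"
    proof
      fix P assume "P \<in> A"
      then have "P \<in> K" "P \<in> zs F" using A F by auto
      then show "P \<in> {Q\<in>K. van f Q}" using f unfolding zs_def van_def by blast
    qed
    ultimately show ?thesis using finite_subset by blast
  qed
  have irrK: "zirreducible K" unfolding zirreducible_def
  proof (intro conjI allI impI)
    show "zclosed K" by (rule cK)
    show "K \<noteq> {}" using inf by auto
  next
    fix A B assume h: "zclosed A \<and> zclosed B \<and> K = A \<union> B"
    show "K = A \<or> K = B"
    proof (rule ccontr)
      assume "\<not> (K = A \<or> K = B)"
      then have "finite A" "finite B" using h fin by blast+
      then show False using h inf by simp
    qed
  qed
  show "irred_curve K" unfolding irred_curve_def
  proof (intro conjI)
    show "zirreducible K" by (rule irrK)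
    obtain Q where Q: "Q \<in> K" using inf by (metis finite.emptyI ex_in_conv)
    have "{Q} \<subset> K" using Q inf by auto
    moreover have "zirreducible {Q}" using Q KPP zirr_single by blast
    ultimately show "\<exists>W. zirreducible W \<and> W \<subset> K" by blast
  next
    show "\<not> (\<exists>W1 W2. zirreducible W1 \<and> zirreducible W2 \<and> W2 \<subset> W1 \<and> W1 \<subset> K)"
    proof
      assume "\<exists>W1 W2. zirreducible W1 \<and> zirreducible W2 \<and> W2 \<subset> W1 \<and> W1 \<subset> K"
      then obtain W1 W2 where W: "zirreducible W1" "zirreducible W2" "W2 \<subset> W1" "W1 \<subset> K" by blast
      then have "finite W1" using fin[of W1] by (auto simp: zirreducible_def)
      then obtain P where "W1 = {P}" using finite_irr_single W(1) by blast
      then have "W2 = {}" using W(3) by auto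
      then show False using W(2) by (simp add: zirreducible_def)
    qed
  qed
qed



lemma tau1_c[simp]: "cU1 (tau1 r) = cV1 r" "cV1 (tau1 r) = cU1 r" "cU2 (tau1 r) = cV2 r" "cV2 (tau1 r) = cU2 r"
  "cX (tau1 r) = cY r" "cY (tau1 r) = cX r" "cZ (tau1 r) = cT r" "cT (tau1 r) = cZ r" "cW (tau1 r) = cW r"
  by (subst rep_eq[of r], simp add: tau1_def)+
lemma tau2_c[simp]: "cU1 (tau2 r) = cU2 r" "cV1 (tau2 r) = cV2 r" "cU2 (tau2 r) = cU1 r" "cV2 (tau2 r) = cV1 r"
  "cX (tau2 r) = cZ r" "cY (tau2 r) = cT r" "cZ (tau2 r) = cX r" "cT (tau2 r) = cY r" "cW (tau2 r) = cW r"
  by (subst rep_eq[of r], simp add: tau2_def)+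
lemma tau3_c[simp]: "cU1 (tau3 r) = cU1 r" "cV1 (tau3 r) = cV1 r" "cU2 (tau3 r) = cU2 r" "cV2 (tau3 r) = cV2 r"
  "cX (tau3 r) = cX r" "cY (tau3 r) = cY r" "cZ (tau3 r) = cZ r" "cT (tau3 r) = cT r" "cW (tau3 r) = - cW r"
  by (subst rep_eq[of r], simp add: tau3_def)+
lemma gam_c[simp]: "cU1 (gam l r) = cU1 r / l" "cV1 (gam l r) = l * cV1 r" "cU2 (gam l r) = cU2 r / l"
  "cV2 (gam l r) = l * cV2 r"
  "cX (gam l r) = l * cX r" "cY (gam l r) = cY r / l" "cZ (gam l r) = l * cZ r" "cT (gam l r) = cT r / l"
  "cW (gam l r) = cW r"
  by (subst rep_eq[of r], simp add: gam_def)+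

lemma lift_tau1: "lift tau1 (pt r) = pt (tau1 r)"
proof (rule lift_pt)
  fix a b c :: complex and s assume "a \<noteq> 0" "b \<noteq> 0" "c \<noteq> 0"
  moreover have "tau1 (scl a b c s) = scl a b c (tau1 s)" by (rule rep_ext) simp_all
  ultimately show "\<exists>a' b' c'. a' \<noteq> 0 \<and> b' \<noteq> 0 \<and> c' \<noteq> 0 \<and> tau1 (scl a b c s) = scl a' b' c' (tau1 s)"
    by blast
qed
lemma lift_tau2: "lift tau2 (pt r) = pt (tau2 r)"
proof (rule lift_pt)
  fix a b c :: complex and s assume "a \<noteq> 0" "b \<noteq> 0" "c \<noteq> 0"
  moreover have "tau2 (scl a b c s) = scl b a c (tau2 s)" by (rule rep_ext) simp_all
  ultimately show "\<exists>a' b' c'. a' \<noteq> 0 \<and> b' \<noteq> 0 \<and> c' \<noteq> 0 \<and> tau2 (scl a b c s) = scl a' b' c' (tau2 s)"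
    by blast
qed
lemma lift_tau3: "lift tau3 (pt r) = pt (tau3 r)"
proof (rule lift_pt)
  fix a b c :: complex and s assume "a \<noteq> 0" "b \<noteq> 0" "c \<noteq> 0"
  moreover have "tau3 (scl a b c s) = scl a b c (tau3 s)" by (rule rep_ext) simp_all
  ultimately show "\<exists>a' b' c'. a' \<noteq> 0 \<and> b' \<noteq> 0 \<and> c' \<noteq> 0 \<and> tau3 (scl a b c s) = scl a' b' c' (tau3 s)"
    by blast
qed
lemma lift_gam: "lift (gam l) (pt r) = pt (gam l r)"
proof (rule lift_pt)
  fix a b c :: complex and s assume "a \<noteq> 0" "b \<noteq> 0" "c \<noteq> 0"
  moreover have "gam l (scl a b c s) = scl a b c (gam l s)" by (rule rep_ext) simp_all
  ultimately show "\<exists>a' b' c'. a' \<noteq> 0 \<and> b' \<noteq> 0 \<and> c' \<noteq> 0 \<and> gam l (scl a b c s) = scl a' b' c' (gam l s)"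
    by blast
qed

lemma valid_tau1[simp]: "valid (tau1 r) = valid r" by (auto simp: valid_c)
lemma valid_tau2[simp]: "valid (tau2 r) = valid r" by (auto simp: valid_c)
lemma valid_tau3[simp]: "valid (tau3 r) = valid r" by (auto simp: valid_c)
lemma valid_gam[simp]: "l \<noteq> 0 \<Longrightarrow> valid (gam l r) = valid r" by (auto simp: valid_c)

lemma tau1_tau1[simp]: "tau1 (tau1 r) = r" by (rule rep_ext) simp_all
lemma tau2_tau2[simp]: "tau2 (tau2 r) = r" by (rule rep_ext) simp_all
lemma tau3_tau3[simp]: "tau3 (tau3 r) = r" by (rule rep_ext) simp_all
lemma gam_gam: "l \<noteq> 0 \<Longrightarrow> gam l (gam (1/l) r) = r" by (rule rep_ext) simp_all

definition EXX :: "rep \<Rightarrow> bool" where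
  "EXX r \<longleftrightarrow> cU1 r * cX r = cV1 r * cY r \<and> cU2 r * cZ r = cV2 r * cT r \<and>
     cW r ^ 2 + (cX r + cZ r) * (cY r + cT r) = 0"
definition ECC :: "rep \<Rightarrow> bool" where
  "ECC r \<longleftrightarrow> cW r = 0 \<and> cX r + cZ r = 0 \<and> cY r + cT r = 0 \<and> cU1 r * cZ r = cV1 r * cT r \<and>
     cU2 r * cZ r = cV2 r * cT r \<and> cV1 r * cU2 r = cU1 r * cV2 r"
definition ECC' :: "rep \<Rightarrow> bool" where
  "ECC' r \<longleftrightarrow> EXX r \<and> cX r = cZ r \<and> cT r = cY r"

lemma XX_eq: "XX = zero_set EXX"
  unfolding XX_def EXX_def by (rule arg_cong[where f=zero_set]) (simp add: fun_eq_iff case_prod_beta cdefs)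
lemma CC_eq: "CC = zero_set ECC"
  unfolding CC_def ECC_def by (rule arg_cong[where f=zero_set]) (simp add: fun_eq_iff case_prod_beta cdefs)
lemma CC'_eq: "CC' = zero_set ECC'"
proof -
  have "zero_set (\<lambda>((u1,v1),(u2,v2),(x,y,z,t,w)). x = z \<and> t = y) = zero_set (\<lambda>r. cX r = cZ r \<and> cT r = cY r)"
    by (rule arg_cong[where f=zero_set]) (simp add: fun_eq_iff case_prod_beta cdefs)
  then show ?thesis unfolding CC'_def XX_eq ECC'_def zero_set_def by auto
qed

lemma cancel2: "(a::complex) \<noteq> 0 \<Longrightarrow> c \<noteq> 0 \<Longrightarrow> (a*p*(c*q) = a*p'*(c*q')) = (p*q = p'*q')"
proof -
  assume "a \<noteq> 0" "c \<noteq> 0"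
  have "a*p*(c*q) = (a*c)*(p*q)" "a*p'*(c*q') = (a*c)*(p'*q')" by (simp_all add: algebra_simps)
  then show ?thesis using \<open>a \<noteq> 0\<close> \<open>c \<noteq> 0\<close> by simp
qed

lemma EXX_scl: "a \<noteq> 0 \<Longrightarrow> b \<noteq> 0 \<Longrightarrow> c \<noteq> 0 \<Longrightarrow> EXX (scl a b c s) = EXX s"
proof -
  assume h: "a \<noteq> 0" "b \<noteq> 0" "c \<noteq> 0"
  have e: "(c * cW s) ^ 2 + (c * cX s + c * cZ s) * (c * cY s + c * cT s) =
     c^2 * (cW s ^ 2 + (cX s + cZ s) * (cY s + cT s))" by (simp add: algebra_simps power2_eq_square)
  show ?thesis unfolding EXX_def scl_c e using h by (simp add: cancel2)
qed

lemma ECC_scl: "a \<noteq> 0 \<Longrightarrow> b \<noteq> 0 \<Longrightarrow> c \<noteq> 0 \<Longrightarrow> ECC (scl a b c s) = ECC s"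
proof -
  assume h: "a \<noteq> 0" "b \<noteq> 0" "c \<noteq> 0"
  have e: "c * cX s + c * cZ s = c * (cX s + cZ s)" "c * cY s + c * cT s = c * (cY s + cT s)"
    by (simp_all add: algebra_simps)
  have f: "(a * cV1 s * (b * cU2 s) = a * cU1 s * (b * cV2 s)) = (cV1 s * cU2 s = cU1 s * cV2 s)"
    using h by (simp add: cancel2)
  show ?thesis unfolding ECC_def scl_c e f using h by (simp add: cancel2)
qed

lemma ECC'_scl: "a \<noteq> 0 \<Longrightarrow> b \<noteq> 0 \<Longrightarrow> c \<noteq> 0 \<Longrightarrow> ECC' (scl a b c s) = ECC' s"
  unfolding ECC'_def using EXX_scl by simp

lemma XX_pt: "pt r \<in> XX \<longleftrightarrow> valid r \<and> EXX r"
  unfolding XX_eq by (rule zero_set_pt) (rule EXX_scl)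
lemma CC_pt: "pt r \<in> CC \<longleftrightarrow> valid r \<and> ECC r"
  unfolding CC_eq by (rule zero_set_pt) (rule ECC_scl)
lemma CC'_pt: "pt r \<in> CC' \<longleftrightarrow> valid r \<and> ECC' r"
  unfolding CC'_eq by (rule zero_set_pt) (rule ECC'_scl)

lemma XX_PP: "XX \<subseteq> PP" by (auto simp: XX_def zero_set_def)
lemma CC_PP: "CC \<subseteq> PP" by (auto simp: CC_def zero_set_def)
lemma CC'_PP: "CC' \<subseteq> PP" by (auto simp: CC'_def zero_set_def)

lemma ECC_EXX: "ECC r \<Longrightarrow> EXX r"
proof -
  assume h: "ECC r"
  then have x: "cX r = - cZ r" and y: "cY r = - cT r" and w: "cW r = 0" unfolding ECC_def
    by (simp_all add: eq_neg_iff_add_eq_0)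
  show ?thesis using h unfolding EXX_def ECC_def x y w by simp
qed

lemma CC_XX: "CC \<subseteq> XX"
proof
  fix P assume "P \<in> CC"
  then obtain r where "valid r" "P = pt r" using CC_PP by (blast elim: PP_E)
  then show "P \<in> XX" using \<open>P \<in> CC\<close> CC_pt XX_pt ECC_EXX by blast
qed
lemma CC'_XX: "CC' \<subseteq> XX" by (auto simp: CC'_def)



lemma bij_gen:
  assumes "\<forall>P\<in>K. g P \<in> K" "\<forall>P\<in>K. h P \<in> K" "\<forall>P\<in>K. g (h P) = P" "\<forall>P\<in>K. h (g P) = P"
  shows "g ` K = K \<and> inj_on g K"
proof
  show "g ` K = K"
  proof
    show "g ` K \<subseteq> K" using assms(1) by blast
    show "K \<subseteq> g ` K"
    proof
      fix P assume "P \<in> K"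
      then have "P = g (h P)" "h P \<in> K" using assms by auto
      then show "P \<in> g ` K" by blast
    qed
  qed
  show "inj_on g K"
  proof (rule inj_onI)
    fix P Q assume "P \<in> K" "Q \<in> K" "g P = g Q"
    then have "h (g P) = h (g Q)" by simp
    then show "P = Q" using assms(4) \<open>P \<in> K\<close> \<open>Q \<in> K\<close> by simp
  qed
qed

lemma maps_into:
  assumes Kpt: "\<And>r. pt r \<in> K \<longleftrightarrow> valid r \<and> E r" and KPP: "K \<subseteq> PP"
    and lf: "\<And>r. lift f (pt r) = pt (f r)" and vf: "\<And>r. valid r \<Longrightarrow> valid (f r)"
    and Ef: "\<And>r. valid r \<Longrightarrow> E r \<Longrightarrow> E (f r)"
  shows "\<forall>P\<in>K. lift f P \<in> K"
proof
  fix P assume "P \<in> K"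
  then obtain r where r: "valid r" "P = pt r" using KPP by (blast elim: PP_E)
  then have "E r" using \<open>P \<in> K\<close> Kpt by blast
  then show "lift f P \<in> K" using r lf vf Ef Kpt by simp
qed

lemma maps_inv:
  assumes KPP: "K \<subseteq> PP"
    and lf: "\<And>r. lift f (pt r) = pt (f r)" and lg: "\<And>r. lift g (pt r) = pt (g r)"
    and fg: "\<And>r. valid r \<Longrightarrow> f (g r) = r"
  shows "\<forall>P\<in>K. lift f (lift g P) = P"
proof
  fix P assume "P \<in> K"
  then obtain r where r: "valid r" "P = pt r" using KPP by (blast elim: PP_E)
  then show "lift f (lift g P) = P" using lf lg fg by simp
qed

lemma EXX_tau1: "EXX r \<Longrightarrow> EXX (tau1 r)" by (auto simp: EXX_def algebra_simps)
lemma EXX_tau2: "EXX r \<Longrightarrow> EXX (tau2 r)" by (auto simp: EXX_def algebra_simps)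
lemma EXX_tau3: "EXX r \<Longrightarrow> EXX (tau3 r)" by (auto simp: EXX_def algebra_simps)
lemma EXX_gam: "l \<noteq> 0 \<Longrightarrow> EXX r \<Longrightarrow> EXX (gam l r)"
proof -
  assume l: "l \<noteq> 0" and h: "EXX r"
  have "cU1 r / l * (l * cX r) = cU1 r * cX r" "l * cV1 r * (cY r / l) = cV1 r * cY r"
    "cU2 r / l * (l * cZ r) = cU2 r * cZ r" "l * cV2 r * (cT r / l) = cV2 r * cT r"
    "(l * cX r + l * cZ r) * (cY r / l + cT r / l) = (cX r + cZ r) * (cY r + cT r)"
    using l by (simp_all add: field_simps)
  then show ?thesis using h unfolding EXX_def gam_c by simp
qed

lemma ECC_tau1: "ECC r \<Longrightarrow> ECC (tau1 r)" by (auto simp: ECC_def algebra_simps)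
lemma ECC_tau2: "ECC r \<Longrightarrow> ECC (tau2 r)"
proof -
  assume h: "ECC r"
  then have x: "cX r = - cZ r" and y: "cY r = - cT r" unfolding ECC_def
    by (simp_all add: eq_neg_iff_add_eq_0)
  show ?thesis using h unfolding ECC_def tau2_c x y by (auto simp: algebra_simps)
qed
lemma ECC_tau3: "ECC r \<Longrightarrow> ECC (tau3 r)" by (auto simp: ECC_def algebra_simps)
lemma ECC_gam: "l \<noteq> 0 \<Longrightarrow> ECC r \<Longrightarrow> ECC (gam l r)"
proof -
  assume l: "l \<noteq> 0" and h: "ECC r"
  have "cU1 r / l * (l * cZ r) = cU1 r * cZ r" "l * cV1 r * (cT r / l) = cV1 r * cT r"
    "cU2 r / l * (l * cZ r) = cU2 r * cZ r" "l * cV2 r * (cT r / l) = cV2 r * cT r"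
    "l * cV1 r * (cU2 r / l) = cV1 r * cU2 r" "cU1 r / l * (l * cV2 r) = cU1 r * cV2 r"
    "l * cX r + l * cZ r = l * (cX r + cZ r)" "cY r / l + cT r / l = (cY r + cT r) / l"
    using l by (simp_all add: field_simps)
  then show ?thesis using h l unfolding ECC_def gam_c by simp
qed

lemma ECC'_tau1: "ECC' r \<Longrightarrow> ECC' (tau1 r)" by (auto simp: ECC'_def EXX_tau1)
lemma ECC'_tau2: "ECC' r \<Longrightarrow> ECC' (tau2 r)" by (auto simp: ECC'_def EXX_tau2)
lemma ECC'_tau3: "ECC' r \<Longrightarrow> ECC' (tau3 r)" by (auto simp: ECC'_def EXX_tau3)
lemma ECC'_gam: "l \<noteq> 0 \<Longrightarrow> ECC' r \<Longrightarrow> ECC' (gam l r)" by (auto simp: ECC'_def EXX_gam)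

lemma gam_gam2: "l \<noteq> 0 \<Longrightarrow> gam (1/l) (gam l r) = r" by (rule rep_ext) simp_all

definition good :: "(rep set \<Rightarrow> rep set) \<Rightarrow> bool" where
  "good g \<longleftrightarrow> g ` XX = XX \<and> inj_on g XX \<and> g ` CC = CC \<and> g ` CC' = CC'"

lemma good_lift:
  assumes lf: "\<And>r. lift f (pt r) = pt (f r)" and lg: "\<And>r. lift g (pt r) = pt (g r)"
    and vf: "\<And>r. valid r \<Longrightarrow> valid (f r)" and vg: "\<And>r. valid r \<Longrightarrow> valid (g r)"
    and fg: "\<And>r. valid r \<Longrightarrow> f (g r) = r" and gf: "\<And>r. valid r \<Longrightarrow> g (f r) = r"
    and X1: "\<And>r. valid r \<Longrightarrow> EXX r \<Longrightarrow> EXX (f r)" and X2: "\<And>r. valid r \<Longrightarrow> EXX r \<Longrightarrow> EXX (g r)"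
    and C1: "\<And>r. valid r \<Longrightarrow> ECC r \<Longrightarrow> ECC (f r)" and C2: "\<And>r. valid r \<Longrightarrow> ECC r \<Longrightarrow> ECC (g r)"
    and D1: "\<And>r. valid r \<Longrightarrow> ECC' r \<Longrightarrow> ECC' (f r)" and D2: "\<And>r. valid r \<Longrightarrow> ECC' r \<Longrightarrow> ECC' (g r)"
  shows "good (lift f)"
proof -
  have a: "lift f ` XX = XX \<and> inj_on (lift f) XX"
    by (rule bij_gen[OF maps_into[OF XX_pt XX_PP lf vf X1] maps_into[OF XX_pt XX_PP lg vg X2]
        maps_inv[OF XX_PP lf lg fg] maps_inv[OF XX_PP lg lf gf]])
  have b: "lift f ` CC = CC \<and> inj_on (lift f) CC"
    by (rule bij_gen[OF maps_into[OF CC_pt CC_PP lf vf C1] maps_into[OF CC_pt CC_PP lg vg C2]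
        maps_inv[OF CC_PP lf lg fg] maps_inv[OF CC_PP lg lf gf]])
  have c: "lift f ` CC' = CC' \<and> inj_on (lift f) CC'"
    by (rule bij_gen[OF maps_into[OF CC'_pt CC'_PP lf vf D1] maps_into[OF CC'_pt CC'_PP lg vg D2]
        maps_inv[OF CC'_PP lf lg fg] maps_inv[OF CC'_PP lg lf gf]])
  show ?thesis using a b c by (simp add: good_def)
qed

lemma good_GG: "g \<in> GG \<Longrightarrow> good g"
proof (induction rule: GG.induct)
  case gid then show ?case by (simp add: good_def)
next
  case gt1 show ?case by (rule good_lift[OF lift_tau1 lift_tau1]) (simp_all add: EXX_tau1 ECC_tau1 ECC'_tau1)
next
  case gt2 show ?case by (rule good_lift[OF lift_tau2 lift_tau2]) (simp_all add: EXX_tau2 ECC_tau2 ECC'_tau2)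
next
  case gt3 show ?case by (rule good_lift[OF lift_tau3 lift_tau3]) (simp_all add: EXX_tau3 ECC_tau3 ECC'_tau3)
next
  case (ggam l)
  have l': "1/l \<noteq> 0" using ggam by simp
  show ?case
    by (rule good_lift[OF lift_gam lift_gam, of l "1/l"])
      (use ggam l' in \<open>simp_all add: EXX_gam ECC_gam ECC'_gam gam_gam gam_gam2\<close>)
next
  case (gcomp g h)
  have e: "(g \<circ> h) ` A = g ` (h ` A)" for A by (simp add: image_comp)
  show ?case using gcomp unfolding good_def e by (simp add: comp_inj_on)
next
  case (ginv g)
  have bij: "bij_betw g XX XX" using ginv by (simp add: good_def bij_betw_def)
  have 1: "inv_into XX g ` XX = XX" "inj_on (inv_into XX g) XX"
    using bij_betw_inv_into[OF bij] by (auto simp: bij_betw_def)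
  have inj: "inj_on g XX" using ginv by (simp add: good_def)
  have 2: "inv_into XX g ` CC = CC"
    using inv_into_image_cancel[OF inj CC_XX] ginv by (simp add: good_def)
  have 3: "inv_into XX g ` CC' = CC'"
    using inv_into_image_cancel[OF inj CC'_XX] ginv by (simp add: good_def)
  show ?case using 1 2 3 by (simp add: good_def)
qed



lemma zero_set_zs: "(\<And>s. E s \<longleftrightarrow> (\<forall>f\<in>F. f s = 0)) \<Longrightarrow> zero_set E = zs F"
  by (simp add: zero_set_def zs_def)

definition "FCC = {cW, \<lambda>r. cX r + cZ r, \<lambda>r. cY r + cT r, \<lambda>r. cU1 r * cZ r - cV1 r * cT r,
   \<lambda>r. cU2 r * cZ r - cV2 r * cT r, \<lambda>r. cV1 r * cU2 r - cU1 r * cV2 r}"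

definition "FCC' = {\<lambda>r. cU1 r * cX r - cV1 r * cY r, \<lambda>r. cU2 r * cZ r - cV2 r * cT r,
   \<lambda>r. cW r * cW r + (cX r + cZ r) * (cY r + cT r), \<lambda>r. cX r - cZ r, \<lambda>r. cT r - cY r}"

lemma m_W: "mhom_poly cW" by (rule mhomI[where da=0 and db=0 and dc=1]) (auto intro: pf_intros)
lemma m_XZ: "mhom_poly (\<lambda>r. cX r + cZ r)" by (rule mhomI[where da=0 and db=0 and dc=1]) (auto intro!: pf_intros simp: algebra_simps)
lemma m_YT: "mhom_poly (\<lambda>r. cY r + cT r)" by (rule mhomI[where da=0 and db=0 and dc=1]) (auto intro!: pf_intros simp: algebra_simps)
lemma m_1: "mhom_poly (\<lambda>r. cU1 r * cZ r - cV1 r * cT r)" by (rule mhomI[where da=1 and db=0 and dc=1]) (auto intro!: pf_intros simp: algebra_simps)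
lemma m_2: "mhom_poly (\<lambda>r. cU2 r * cZ r - cV2 r * cT r)" by (rule mhomI[where da=0 and db=1 and dc=1]) (auto intro!: pf_intros simp: algebra_simps)
lemma m_3: "mhom_poly (\<lambda>r. cV1 r * cU2 r - cU1 r * cV2 r)" by (rule mhomI[where da=1 and db=1 and dc=0]) (auto intro!: pf_intros simp: algebra_simps)
lemma m_4: "mhom_poly (\<lambda>r. cU1 r * cX r - cV1 r * cY r)" by (rule mhomI[where da=1 and db=0 and dc=1]) (auto intro!: pf_intros simp: algebra_simps)
lemma m_5: "mhom_poly (\<lambda>r. cW r * cW r + (cX r + cZ r) * (cY r + cT r))" by (rule mhomI[where da=0 and db=0 and dc=2]) (auto intro!: pf_intros simp: algebra_simps power2_eq_square)
lemma m_6: "mhom_poly (\<lambda>r. cX r - cZ r)" by (rule mhomI[where da=0 and db=0 and dc=1]) (auto intro!: pf_intros simp: algebra_simps)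
lemma m_7: "mhom_poly (\<lambda>r. cT r - cY r)" by (rule mhomI[where da=0 and db=0 and dc=1]) (auto intro!: pf_intros simp: algebra_simps)

lemma mh_FCC: "mh FCC" unfolding mh_def FCC_def using m_W m_XZ m_YT m_1 m_2 m_3 by blast
lemma mh_FCC': "mh FCC'" unfolding mh_def FCC'_def using m_4 m_2 m_5 m_6 m_7 by blast

lemma zclosed_CC: "zclosed CC"
proof -
  have "CC = zs FCC" unfolding CC_eq
    by (rule zero_set_zs) (simp add: ECC_def FCC_def)
  then show ?thesis using zclosed_zs[OF mh_FCC] by simp
qed

lemma zclosed_CC': "zclosed CC'"
proof -
  have "CC' = zs FCC'" unfolding CC'_eq
    by (rule zero_set_zs) (simp add: ECC'_def EXX_def FCC'_def power2_eq_square)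
  then show ?thesis using zclosed_zs[OF mh_FCC'] by simp
qed

definition ispoly :: "(complex \<Rightarrow> complex) \<Rightarrow> bool" where
  "ispoly f \<longleftrightarrow> (\<exists>p. \<forall>s. f s = poly p s)"

lemma ispoly_const: "ispoly (\<lambda>s. c)" unfolding ispoly_def by (intro exI[of _ "[:c:]"]) simp
lemma ispoly_id: "ispoly (\<lambda>s. s)" unfolding ispoly_def by (intro exI[of _ "[:0,1:]"]) simp
lemma ispoly_add: "ispoly f \<Longrightarrow> ispoly g \<Longrightarrow> ispoly (\<lambda>s. f s + g s)"
proof -
  assume "ispoly f" "ispoly g"
  then obtain p q where "\<forall>s. f s = poly p s" "\<forall>s. g s = poly q s" unfolding ispoly_def by blast
  then show ?thesis unfolding ispoly_def by (intro exI[of _ "p + q"]) simp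
qed
lemma ispoly_mult: "ispoly f \<Longrightarrow> ispoly g \<Longrightarrow> ispoly (\<lambda>s. f s * g s)"
proof -
  assume "ispoly f" "ispoly g"
  then obtain p q where "\<forall>s. f s = poly p s" "\<forall>s. g s = poly q s" unfolding ispoly_def by blast
  then show ?thesis unfolding ispoly_def by (intro exI[of _ "p * q"]) simp
qed
lemma ispoly_minus: "ispoly f \<Longrightarrow> ispoly (\<lambda>s. - f s)"
proof -
  assume "ispoly f"
  then obtain p where "\<forall>s. f s = poly p s" unfolding ispoly_def by blast
  then show ?thesis unfolding ispoly_def by (intro exI[of _ "- p"]) simp
qed
lemmas ispoly_intros = ispoly_const ispoly_id ispoly_add ispoly_mult ispoly_minus

lemma pc_of:
  assumes "ispoly (\<lambda>s. cU1 (\<psi> s))" "ispoly (\<lambda>s. cV1 (\<psi> s))" "ispoly (\<lambda>s. cU2 (\<psi> s))"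
    "ispoly (\<lambda>s. cV2 (\<psi> s))" "ispoly (\<lambda>s. cX (\<psi> s))" "ispoly (\<lambda>s. cY (\<psi> s))"
    "ispoly (\<lambda>s. cZ (\<psi> s))" "ispoly (\<lambda>s. cT (\<psi> s))" "ispoly (\<lambda>s. cW (\<psi> s))"
  shows "\<forall>i<9. \<exists>p. \<forall>s. crd i (\<psi> s) = poly p s"
proof (intro allI impI)
  fix i :: nat assume "i < 9"
  then show "\<exists>p. \<forall>s. crd i (\<psi> s) = poly p s"
    using assms unfolding ispoly_def by (auto dest!: less9)
qed

definition psiC1 :: "complex \<Rightarrow> rep" where "psiC1 s = ((1, s), (1, s), (-s, -1, s, 1, 0))"
definition psiC2 :: "complex \<Rightarrow> rep" where "psiC2 s = ((s, 1), (s, 1), (-1, -s, 1, s, 0))"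

lemma irr_CC: "irred_curve CC"
proof (rule curve_lemma(2)[of psiC1 psiC2])
  show "\<forall>i<9. \<exists>p. \<forall>s. crd i (psiC1 s) = poly p s"
    by (rule pc_of; unfold psiC1_def c_simps; intro ispoly_intros)
  show "\<forall>i<9. \<exists>p. \<forall>s. crd i (psiC2 s) = poly p s"
    by (rule pc_of; unfold psiC2_def c_simps; intro ispoly_intros)
  show "valid (psiC1 s)" for s by (simp add: psiC1_def valid_def)
  show "valid (psiC2 s)" for s by (simp add: psiC2_def valid_def)
  show "pt (psiC2 s) = pt (psiC1 (1/s))" if "s \<noteq> 0" for s
  proof -
    have "psiC1 (1/s) = scl (1/s) (1/s) (1/s) (psiC2 s)"
      by (rule rep_ext) (simp_all add: psiC1_def psiC2_def that)
    then show ?thesis using that by (simp add: pt_scl)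
  qed
  show "zclosed CC" by (rule zclosed_CC)
  show "CC = range (\<lambda>s. pt (psiC1 s)) \<union> range (\<lambda>s. pt (psiC2 s))"
  proof
    show "range (\<lambda>s. pt (psiC1 s)) \<union> range (\<lambda>s. pt (psiC2 s)) \<subseteq> CC"
    proof -
      have "pt (psiC1 s) \<in> CC" for s by (simp add: CC_pt psiC1_def valid_def ECC_def)
      moreover have "pt (psiC2 s) \<in> CC" for s by (simp add: CC_pt psiC2_def valid_def ECC_def)
      ultimately show ?thesis by blast
    qed
    show "CC \<subseteq> range (\<lambda>s. pt (psiC1 s)) \<union> range (\<lambda>s. pt (psiC2 s))"
    proof
      fix P assume P: "P \<in> CC"
      then obtain r where r: "valid r" "P = pt r" using CC_PP by (blast elim: PP_E)
      then have E: "ECC r" using P CC_pt by blast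
      show "P \<in> range (\<lambda>s. pt (psiC1 s)) \<union> range (\<lambda>s. pt (psiC2 s))"
      proof (cases "cV1 r = 0")
        case False
        define s where "s = cU1 r / cV1 r"
        have u2: "cU2 r = s * cV2 r" using E False unfolding ECC_def s_def by (simp add: field_simps)
        have v2: "cV2 r \<noteq> 0" using r(1) u2 unfolding valid_c by auto
        have t: "cT r = s * cZ r" using E False unfolding ECC_def s_def by (simp add: field_simps)
        have x: "cX r = - cZ r" and y: "cY r = - cT r" and w: "cW r = 0"
          using E unfolding ECC_def by (simp_all add: eq_neg_iff_add_eq_0)
        have z: "cZ r \<noteq> 0" using r(1) x y t w unfolding valid_c by auto
        define a b c where "a = cV1 r" "b = cV2 r" "c = cZ r"
        have "r = scl a b c (psiC2 s)" unfolding a_b_c_def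
          by (rule rep_ext) (simp_all add: psiC2_def s_def u2 t x y w False)
        moreover have "a \<noteq> 0" "b \<noteq> 0" "c \<noteq> 0" using False v2 z by (simp_all add: a_b_c_def)
        ultimately have "P = pt (psiC2 s)" using r by (simp add: pt_scl)
        then show ?thesis by blast
      next
        case True
        then have u1: "cU1 r \<noteq> 0" using r(1) unfolding valid_c by auto
        define s where "s = cV1 r / cU1 r"
        have v2: "cV2 r = s * cU2 r" using E u1 unfolding ECC_def s_def by (simp add: field_simps)
        have u2: "cU2 r \<noteq> 0" using r(1) v2 unfolding valid_c by auto
        have z: "cZ r = s * cT r" using E u1 unfolding ECC_def s_def by (simp add: field_simps)
        have x: "cX r = - cZ r" and y: "cY r = - cT r" and w: "cW r = 0"
          using E unfolding ECC_def by (simp_all add: eq_neg_iff_add_eq_0)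
        have t: "cT r \<noteq> 0" using r(1) x y z w unfolding valid_c by auto
        define a b c where "a = cU1 r" "b = cU2 r" "c = cT r"
        have "r = scl a b c (psiC1 s)" unfolding a_b_c_def
          by (rule rep_ext) (simp_all add: psiC1_def s_def v2 z x y w u1)
        moreover have "a \<noteq> 0" "b \<noteq> 0" "c \<noteq> 0" using u1 u2 t by (simp_all add: a_b_c_def)
        ultimately have "P = pt (psiC1 s)" using r by (simp add: pt_scl)
        then show ?thesis by blast
      qed
    qed
  qed
  show "infinite CC"
  proof -
    have "inj (\<lambda>s. pt (psiC1 s))"
    proof (rule injI)
      fix s s' assume "pt (psiC1 s) = pt (psiC1 s')"
      then have "proj_eq (psiC1 s) (psiC1 s')" by (simp add: pt_eq_iff)
      then obtain a b c where "psiC1 s' = scl a b c (psiC1 s)" unfolding proj_eq_def by blast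
      then have "cU1 (psiC1 s') = a * cU1 (psiC1 s)" "cV1 (psiC1 s') = a * cV1 (psiC1 s)" by simp_all
      then show "s = s'" by (simp add: psiC1_def)
    qed
    then have "infinite (range (\<lambda>s. pt (psiC1 s)))"
      using finite_imageD infinite_UNIV_char_0[where 'a=complex] by blast
    moreover have "range (\<lambda>s. pt (psiC1 s)) \<subseteq> CC" by (auto simp: CC_pt psiC1_def valid_def ECC_def)
    ultimately show ?thesis using finite_subset by blast
  qed
qed

definition psiD1 :: "complex \<Rightarrow> rep" where "psiD1 s = ((-(s*s), 1), (-(s*s), 1), (1, -(s*s), 1, -(s*s), 2*s))"
definition psiD2 :: "complex \<Rightarrow> rep" where "psiD2 s = ((-1, s*s), (-1, s*s), (s*s, -1, s*s, -1, 2*s))"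

lemma irr_CC': "irred_curve CC'"
proof (rule curve_lemma(2)[of psiD1 psiD2])
  show "\<forall>i<9. \<exists>p. \<forall>s. crd i (psiD1 s) = poly p s"
    by (rule pc_of; unfold psiD1_def c_simps; intro ispoly_intros)
  show "\<forall>i<9. \<exists>p. \<forall>s. crd i (psiD2 s) = poly p s"
    by (rule pc_of; unfold psiD2_def c_simps; intro ispoly_intros)
  show "valid (psiD1 s)" for s by (simp add: psiD1_def valid_def)
  show "valid (psiD2 s)" for s by (simp add: psiD2_def valid_def)
  show "pt (psiD2 s) = pt (psiD1 (1/s))" if "s \<noteq> 0" for s
  proof -
    have "psiD1 (1/s) = scl (1/(s*s)) (1/(s*s)) (1/(s*s)) (psiD2 s)"
      by (rule rep_ext) (simp_all add: psiD1_def psiD2_def that field_simps)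
    then show ?thesis using that by (simp add: pt_scl)
  qed
  show "zclosed CC'" by (rule zclosed_CC')
  have inD1: "pt (psiD1 s) \<in> CC'" for s
    by (simp add: CC'_pt psiD1_def valid_def ECC'_def EXX_def power2_eq_square algebra_simps)
  have inD2: "pt (psiD2 s) \<in> CC'" for s
    by (simp add: CC'_pt psiD2_def valid_def ECC'_def EXX_def power2_eq_square algebra_simps)
  show "CC' = range (\<lambda>s. pt (psiD1 s)) \<union> range (\<lambda>s. pt (psiD2 s))"
  proof
    show "range (\<lambda>s. pt (psiD1 s)) \<union> range (\<lambda>s. pt (psiD2 s)) \<subseteq> CC'"
      using inD1 inD2 by blast
    show "CC' \<subseteq> range (\<lambda>s. pt (psiD1 s)) \<union> range (\<lambda>s. pt (psiD2 s))"
    proof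
      fix P assume P: "P \<in> CC'"
      then obtain r where r: "valid r" "P = pt r" using CC'_PP by (blast elim: PP_E)
      then have E: "ECC' r" using P CC'_pt by blast
      then have xz: "cZ r = cX r" and ty: "cT r = cY r" and e1: "cU1 r * cX r = cV1 r * cY r"
        and e2: "cU2 r * cX r = cV2 r * cY r" and e3: "cW r * cW r + 4 * (cX r * cY r) = 0"
        unfolding ECC'_def EXX_def by (auto simp: power2_eq_square algebra_simps)
      show "P \<in> range (\<lambda>s. pt (psiD1 s)) \<union> range (\<lambda>s. pt (psiD2 s))"
      proof (cases "cX r = 0")
        case False
        define s where "s = cW r / (2 * cX r)"
        have y: "cY r = cX r * (-(s*s))"
        proof -
          have k: "cX r * (cY r * 4) = -(cW r * cW r)" using e3 by (simp add: eq_neg_iff_add_eq_0 algebra_simps)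
          show ?thesis using False k unfolding s_def by (simp add: field_simps)
        qed
        have w: "cW r = cX r * (2 * s)" using False unfolding s_def by simp
        have v1: "cV1 r \<noteq> 0" using e1 r(1) False unfolding valid_c by auto
        have v2: "cV2 r \<noteq> 0" using e2 r(1) False unfolding valid_c by auto
        have "(cU1 r - cV1 r * (-(s*s))) * cX r = 0" using e1 unfolding y by (simp add: algebra_simps)
        then have u1: "cU1 r = cV1 r * (-(s*s))" using False by (simp add: eq_neg_iff_add_eq_0)
        have "(cU2 r - cV2 r * (-(s*s))) * cX r = 0" using e2 unfolding y by (simp add: algebra_simps)
        then have u2: "cU2 r = cV2 r * (-(s*s))" using False by (simp add: eq_neg_iff_add_eq_0)
        define a b c where "a = cV1 r" "b = cV2 r" "c = cX r"
        have "r = scl a b c (psiD1 s)" unfolding a_b_c_def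
          by (rule rep_ext) (simp_all add: psiD1_def xz ty u1 u2 y w)
        moreover have "a \<noteq> 0" "b \<noteq> 0" "c \<noteq> 0" using v1 v2 False by (simp_all add: a_b_c_def)
        ultimately have "P = pt (psiD1 s)" using r by (simp add: pt_scl)
        then show ?thesis by blast
      next
        case True
        have w: "cW r = 0" using e3 True by simp
        have y: "cY r \<noteq> 0" using r(1) True xz ty w unfolding valid_c by auto
        have v1: "cV1 r = 0" using e1 True y by simp
        have v2: "cV2 r = 0" using e2 True y by simp
        have u1: "cU1 r \<noteq> 0" using r(1) v1 unfolding valid_c by auto
        have u2: "cU2 r \<noteq> 0" using r(1) v2 unfolding valid_c by auto
        define a b c where "a = - cU1 r" "b = - cU2 r" "c = - cY r"
        have "r = scl a b c (psiD2 0)" unfolding a_b_c_def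
          by (rule rep_ext) (simp_all add: psiD2_def xz ty True w v1 v2)
        moreover have "a \<noteq> 0" "b \<noteq> 0" "c \<noteq> 0" using u1 u2 y by (simp_all add: a_b_c_def)
        ultimately have "P = pt (psiD2 0)" using r by (simp add: pt_scl)
        then show ?thesis by blast
      qed
    qed
  qed
  show "infinite CC'"
  proof -
    have "inj (\<lambda>s. pt (psiD1 s))"
    proof (rule injI)
      fix s s' assume "pt (psiD1 s) = pt (psiD1 s')"
      then have "proj_eq (psiD1 s) (psiD1 s')" by (simp add: pt_eq_iff)
      then obtain a b c where "psiD1 s' = scl a b c (psiD1 s)" unfolding proj_eq_def by blast
      then have "cX (psiD1 s') = c * cX (psiD1 s)" "cW (psiD1 s') = c * cW (psiD1 s)" by simp_all
      then show "s = s'" by (simp add: psiD1_def)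
    qed
    then have "infinite (range (\<lambda>s. pt (psiD1 s)))"
      using finite_imageD infinite_UNIV_char_0[where 'a=complex] by blast
    moreover have "range (\<lambda>s. pt (psiD1 s)) \<subseteq> CC'" using inD1 by blast
    ultimately show ?thesis using finite_subset by blast
  qed
qed


lemma alg:
  fixes u2 v2 x y z t w :: complex
  assumes h1: "u2 * u2 = v2 * v2" and h2: "v2 * t * (u2 * x) = v2 * y * (u2 * z)"
    and h3: "u2 * z * z = u2 * x * x" and xy: "x = y" and e2: "u2 * z = v2 * t"
    and e3: "w^2 + (x + z) * (y + t) = 0"
    and v: "u2 \<noteq> 0 \<or> v2 \<noteq> 0" and v': "x \<noteq> 0 \<or> y \<noteq> 0 \<or> z \<noteq> 0 \<or> t \<noteq> 0 \<or> w \<noteq> 0"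
  shows "(w = 0 \<and> x + z = 0 \<and> y + t = 0 \<and> z = t \<and> u2 = v2) \<or> (x = z \<and> t = y)"
proof -
  have u2: "u2 \<noteq> 0" using h1 v by auto
  have v2: "v2 \<noteq> 0" using h1 v by auto
  have "(u2 - v2) * (u2 + v2) = 0" using h1 by (simp add: algebra_simps)
  then have uv: "u2 = v2 \<or> u2 = - v2" by (auto simp: eq_neg_iff_add_eq_0)
  have "u2 * ((z - x) * (z + x)) = 0" using h3 by (simp add: algebra_simps)
  then have zx: "z = x \<or> z = - x" using u2 by (auto simp: eq_neg_iff_add_eq_0)
  show ?thesis
  proof (cases "u2 = v2")
    case True
    then have zt: "z = t" using e2 u2 by simp
    show ?thesis
    proof (cases "z = x")
      case True then show ?thesis using zt xy by simp
    next
      case False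
      then have "z = - x" using zx by simp
      then have "x + z = 0" "y + t = 0" using zt xy by simp_all
      then have "w = 0" using e3 by simp
      then show ?thesis using \<open>x + z = 0\<close> \<open>y + t = 0\<close> zt \<open>u2 = v2\<close> by simp
    qed
  next
    case False
    then have uv': "u2 = - v2" using uv by simp
    then have "v2 * t = - (v2 * z)" using e2 by simp
    then have "v2 * (t + z) = 0" by (simp add: distrib_left)
    then have tz: "t = - z" using v2 by (simp add: eq_neg_iff_add_eq_0)
    have "(v2 * u2) * (x * (t - z)) = 0" using h2 xy by (simp add: algebra_simps)
    then have "x * (t - z) = 0" using u2 v2 by simp
    then have "x * z = 0" using tz by (simp add: algebra_simps)
    then have x0: "x = 0" and z0: "z = 0" using zx by auto
    then have "t = 0" "y = 0" using tz xy by simp_all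
    then have "w = 0" using e3 x0 z0 by simp
    then show ?thesis using v' x0 z0 \<open>t = 0\<close> \<open>y = 0\<close> by simp
  qed
qed

lemma m_U1: "mhom_poly cU1" by (rule mhomI[where da=1 and db=0 and dc=0]) (auto intro: pf_intros)
lemma m_V1: "mhom_poly cV1" by (rule mhomI[where da=1 and db=0 and dc=0]) (auto intro: pf_intros)

lemma img_in: "\<forall>g\<in>GG. g ` Z = Z \<Longrightarrow> g \<in> GG \<Longrightarrow> P \<in> Z \<Longrightarrow> g P \<in> Z" by blast

lemma no_fixed: "\<not> (\<exists>P\<in>XX. \<forall>g\<in>GG. g P = P)"
proof
  assume "\<exists>P\<in>XX. \<forall>g\<in>GG. g P = P"
  then obtain P where P: "P \<in> XX" "\<forall>g\<in>GG. g P = P" by blast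
  obtain r where r: "valid r" "P = pt r" using P(1) XX_PP by (blast elim: PP_E)
  have "lift (gam 2) P = P" using P(2) GG.ggam[of 2] by simp
  then have "pt (gam 2 r) = pt r" using r lift_gam by simp
  then have "proj_eq (gam 2 r) r" by (simp add: pt_eq_iff)
  then obtain a b c where abc: "r = scl a b c (gam 2 r)" unfolding proj_eq_def by blast
  have g1: "cU1 r = a * (cU1 r / 2)" "cV1 r = a * (2 * cV1 r)"
    using arg_cong[OF abc, of cU1] arg_cong[OF abc, of cV1] by simp_all
  have "lift tau1 P = P" using P(2) GG.gt1 by simp
  then have "pt (tau1 r) = pt r" using r lift_tau1 by simp
  then have "proj_eq (tau1 r) r" by (simp add: pt_eq_iff)
  then obtain a' b' c' where abc': "r = scl a' b' c' (tau1 r)" unfolding proj_eq_def by blast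
  have t1: "cU1 r = a' * cV1 r" "cV1 r = a' * cU1 r"
    using arg_cong[OF abc', of cU1] arg_cong[OF abc', of cV1] by simp_all
  have u1: "cU1 r \<noteq> 0"
  proof
    assume h: "cU1 r = 0"
    then have "cV1 r = 0" using t1(2) by simp
    then show False using r(1) h unfolding valid_c by simp
  qed
  have v1: "cV1 r \<noteq> 0"
  proof
    assume h: "cV1 r = 0"
    then have "cU1 r = 0" using t1(1) by simp
    then show False using u1 by simp
  qed
  have "2 * cU1 r = a * cU1 r" by (subst (1) g1(1)) simp
  then have "a = 2" using u1 by simp
  moreover have "1 * cV1 r = (a * 2) * cV1 r" by (subst (1) g1(2)) simp
  then have "a * 2 = 1" using v1 by (simp only: mult_cancel_right) simp
  ultimately show False by simp
qed


lemma case_no: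
  assumes Zs: "Z \<subseteq> XX" and irr: "zirreducible Z" and inv: "\<forall>g\<in>GG. g ` Z = Z"
    and no: "\<not> (\<exists>r. valid r \<and> pt r \<in> Z \<and> cU1 r * cV1 r \<noteq> 0)"
  shows False
proof -
  have mA: "mh {cU1}" and mB: "mh {cV1}" using m_U1 m_V1 by (auto simp: mh_def)
  define A where "A = zs {cU1}"
  define B where "B = zs {cV1}"
  have Apt: "pt r \<in> A \<longleftrightarrow> valid r \<and> cU1 r = 0" for r unfolding A_def using zs_pt[OF mA] by simp
  have Bpt: "pt r \<in> B \<longleftrightarrow> valid r \<and> cV1 r = 0" for r unfolding B_def using zs_pt[OF mB] by simp
  have cZ: "zclosed Z" using irr by (simp add: zirreducible_def)
  have ZPP: "Z \<subseteq> PP" using Zs XX_PP by blast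
  have "Z = (Z \<inter> A) \<union> (Z \<inter> B)"
  proof
    show "Z \<subseteq> (Z \<inter> A) \<union> (Z \<inter> B)"
    proof
      fix P assume "P \<in> Z"
      then obtain r where r: "valid r" "P = pt r" using ZPP by (blast elim: PP_E)
      then have "pt r \<in> Z" using \<open>P \<in> Z\<close> by simp
      then have "cU1 r * cV1 r = 0" using no r(1) by blast
      then have "cU1 r = 0 \<or> cV1 r = 0" by simp
      then show "P \<in> (Z \<inter> A) \<union> (Z \<inter> B)" using Apt Bpt r \<open>P \<in> Z\<close> by blast
    qed
  qed blast
  moreover have "zclosed (Z \<inter> A)" "zclosed (Z \<inter> B)"
    using cZ zclosed_Int zclosed_zs[OF mA] zclosed_zs[OF mB] unfolding A_def B_def by blast+
  ultimately have "Z = Z \<inter> A \<or> Z = Z \<inter> B" using irr unfolding zirreducible_def by metis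
  then have ZAB: "Z \<subseteq> A \<or> Z \<subseteq> B" by blast
  obtain P where P: "P \<in> Z" using irr by (auto simp: zirreducible_def)
  have "P \<in> lift tau1 ` Z" using inv GG.gt1 P by blast
  then obtain P' where P': "P' \<in> Z" "P = lift tau1 P'" by blast
  obtain r where r: "valid r" "P' = pt r" using P'(1) ZPP by (blast elim: PP_E)
  have Pt: "P = pt (tau1 r)" using P' r lift_tau1 by simp
  show False
    using ZAB
  proof
    assume ZA: "Z \<subseteq> A"
    have "pt r \<in> A" using ZA P'(1) r(2) by blast
    then have 1: "cU1 r = 0" using Apt by blast
    have "pt (tau1 r) \<in> A" using ZA P Pt by blast
    then have "cU1 (tau1 r) = 0" using Apt by blast
    note 1 this
    then show False using r(1) unfolding valid_c by simp
  next
    assume ZB: "Z \<subseteq> B"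
    have "pt r \<in> B" using ZB P'(1) r(2) by blast
    then have 1: "cV1 r = 0" using Bpt by blast
    have "pt (tau1 r) \<in> B" using ZB P Pt by blast
    then have "cV1 (tau1 r) = 0" using Bpt by blast
    note 1 this
    then show False using r(1) unfolding valid_c by simp
  qed
qed


lemma core:
  assumes Zs: "Z \<subseteq> XX" and ic: "irred_curve Z" and inv: "\<forall>g\<in>GG. g ` Z = Z"
    and r0: "valid r0" "pt r0 \<in> Z" "cU1 r0 = 1" "cV1 r0 = 1"
  shows "Z = CC \<or> Z = CC'"
proof -
  have irr: "zirreducible Z" using ic by (simp add: irred_curve_def)
  have cZ: "zclosed Z" using irr by (simp add: zirreducible_def)
  have EX0: "EXX r0" using r0(1,2) Zs XX_pt by blast
  have xy: "cX r0 = cY r0" using EX0 r0(3,4) by (simp add: EXX_def)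
  define psi :: "complex \<Rightarrow> rep" where
    "psi = (\<lambda>l. ((1, l*l), (cU2 r0, l*l*cV2 r0), (l*l*cX r0, cY r0, l*l*cZ r0, cT r0, l*cW r0)))"
  have psi_eq: "psi l = scl l l l (gam l r0)" if "l \<noteq> 0" for l
    by (rule rep_ext) (simp_all add: psi_def that r0(3,4))
  have psi_pt: "pt (psi l) = lift (gam l) (pt r0)" if "l \<noteq> 0" for l
    using psi_eq[OF that] that by (simp add: pt_scl lift_gam)
  have psi_valid: "valid (psi l)" if "l \<noteq> 0" for l
    using psi_eq[OF that] that r0(1) by simp
  have pc: "\<forall>i<9. \<exists>p. \<forall>s. crd i (psi s) = poly p s"
    by (rule pc_of; unfold psi_def c_simps; intro ispoly_intros)
  define S where "S = (\<lambda>l. pt (psi l)) ` (-{0})"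
  have irrS: "zirreducible (cl S)" by (rule orbit_irr[OF pc psi_valid S_def])
  have SZ: "S \<subseteq> Z"
  proof
    fix Q assume "Q \<in> S"
    then obtain l where l: "l \<noteq> 0" "Q = pt (psi l)" unfolding S_def by blast
    have "lift (gam l) \<in> GG" using l(1) by (rule GG.ggam)
    then have "lift (gam l) (pt r0) \<in> Z" using inv r0(2) by blast
    then show "Q \<in> Z" using l psi_pt by simp
  qed
  have SPP: "S \<subseteq> PP" unfolding S_def using psi_valid PP_iff by blast
  have SclS: "S \<subseteq> cl S" by (rule cl_sub[OF SPP])
  have clZ: "cl S \<subseteq> Z" by (rule cl_min[OF cZ SZ])
  have psi1: "psi 1 = r0" by (rule rep_ext) (simp_all add: psi_def r0(3,4))
  have p0S: "pt r0 \<in> S" unfolding S_def using psi1 by force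
  have p2S: "pt (psi 2) \<in> S" unfolding S_def by simp
  have p2ne: "pt (psi 2) \<noteq> pt r0"
  proof
    assume "pt (psi 2) = pt r0"
    then have "pt r0 = pt (psi 2)" by simp
    then have "proj_eq r0 (psi 2)" by (simp only: pt_eq_iff)
    then obtain a b c where abc: "psi 2 = scl a b c r0" unfolding proj_eq_def by blast
    have "cU1 (psi 2) = a * cU1 r0" "cV1 (psi 2) = a * cV1 r0" using abc by simp_all
    then show False by (simp add: psi_def r0(3,4))
  qed
  have p0PP: "pt r0 \<in> PP" using r0(1) PP_iff by blast
  have inc: "pt r0 \<in> cl S" "pt (psi 2) \<in> cl S" using p0S p2S SclS by (simp_all add: subset_iff)
  have sub0: "{pt r0} \<subset> cl S"
  proof (rule psubsetI)
    show "{pt r0} \<subseteq> cl S" using inc by simp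
    show "{pt r0} \<noteq> cl S" using inc p2ne by auto
  qed
  have zs0: "zirreducible {pt r0}" by (rule zirr_single[OF p0PP])
  have ZclS: "Z = cl S"
  proof (rule ccontr)
    assume "Z \<noteq> cl S"
    then have "cl S \<subset> Z" using clZ by blast
    then have "\<exists>W1 W2. zirreducible W1 \<and> zirreducible W2 \<and> W2 \<subset> W1 \<and> W1 \<subset> Z"
      using irrS zs0 sub0 by (intro exI[of _ "cl S"] exI[of _ "{pt r0}"]) simp
    then show False using ic unfolding irred_curve_def by simp
  qed
  have sub0Z: "{pt r0} \<subset> Z" using sub0 ZclS by simp
  define e1 where "e1 = (\<lambda>q. cU1 q * cV2 q * cU2 r0 - cV1 q * cU2 q * cV2 r0)"
  define e2 where "e2 = (\<lambda>q. cU2 q * cZ q * (cU2 r0 * cX r0) - cU2 q * cX q * (cU2 r0 * cZ r0))"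
  define e3 where "e3 = (\<lambda>q. cU1 q * cX q * cZ r0 - cU1 q * cZ q * cX r0)"
  have me1: "mhom_poly e1" unfolding e1_def
    by (rule mhomI[where da=1 and db=1 and dc=0]) (auto intro!: pf_intros simp: algebra_simps)
  have me2: "mhom_poly e2" unfolding e2_def
    by (rule mhomI[where da=0 and db=1 and dc=1]) (auto intro!: pf_intros simp: algebra_simps)
  have me3: "mhom_poly e3" unfolding e3_def
    by (rule mhomI[where da=1 and db=0 and dc=1]) (auto intro!: pf_intros simp: algebra_simps)
  have mE: "mh {e1, e2, e3}" using me1 me2 me3 by (simp add: mh_def)
  define EE where "EE = zs {e1, e2, e3}"
  have EEpt: "pt q \<in> EE \<longleftrightarrow> valid q \<and> e1 q = 0 \<and> e2 q = 0 \<and> e3 q = 0" for q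
    unfolding EE_def using zs_pt[OF mE] by simp
  have SE: "S \<subseteq> EE"
  proof
    fix Q assume "Q \<in> S"
    then obtain l where l: "l \<noteq> 0" "Q = pt (psi l)" unfolding S_def by blast
    have "e1 (psi l) = 0" "e2 (psi l) = 0" "e3 (psi l) = 0"
      by (simp_all add: e1_def e2_def e3_def psi_def algebra_simps)
    then show "Q \<in> EE" using l EEpt psi_valid by simp
  qed
  have cE: "zclosed EE" unfolding EE_def by (rule zclosed_zs[OF mE])
  have ZE: "Z \<subseteq> EE" using ZclS cl_min[OF cE SE] by simp
  have "lift tau1 (pt r0) \<in> Z" using inv GG.gt1 r0(2) by blast
  then have "pt (tau1 r0) \<in> EE" using ZE lift_tau1 by auto
  then have t1: "e1 (tau1 r0) = 0" "e2 (tau1 r0) = 0" using EEpt by auto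
  have "lift tau2 (pt r0) \<in> Z" using inv GG.gt2 r0(2) by blast
  then have "pt (tau2 r0) \<in> EE" using ZE lift_tau2 by auto
  then have t2: "e3 (tau2 r0) = 0" using EEpt by auto
  have h1: "cU2 r0 * cU2 r0 = cV2 r0 * cV2 r0" using t1(1) r0(3,4) by (simp add: e1_def)
  have h2: "cV2 r0 * cT r0 * (cU2 r0 * cX r0) = cV2 r0 * cY r0 * (cU2 r0 * cZ r0)"
    using t1(2) by (simp add: e2_def)
  have h3: "cU2 r0 * cZ r0 * cZ r0 = cU2 r0 * cX r0 * cX r0" using t2 by (simp add: e3_def)
  have ex2: "cU2 r0 * cZ r0 = cV2 r0 * cT r0"
    and ex3: "(cW r0)^2 + (cX r0 + cZ r0) * (cY r0 + cT r0) = 0" using EX0 by (simp_all add: EXX_def)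
  have v: "cU2 r0 \<noteq> 0 \<or> cV2 r0 \<noteq> 0"
    and v': "cX r0 \<noteq> 0 \<or> cY r0 \<noteq> 0 \<or> cZ r0 \<noteq> 0 \<or> cT r0 \<noteq> 0 \<or> cW r0 \<noteq> 0"
    using r0(1) unfolding valid_c by simp_all
  have A: "(cW r0 = 0 \<and> cX r0 + cZ r0 = 0 \<and> cY r0 + cT r0 = 0 \<and> cZ r0 = cT r0 \<and> cU2 r0 = cV2 r0) \<or>
       (cX r0 = cZ r0 \<and> cT r0 = cY r0)"
    by (rule alg[OF h1 h2 h3 xy ex2 ex3 v v'])
  have fin: "Z = K" if K: "irred_curve K" "zclosed K" "pt r0 \<in> K" "\<forall>l. l \<noteq> 0 \<longrightarrow> lift (gam l) ` K = K" for K
  proof -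
    have "S \<subseteq> K"
    proof
      fix Q assume "Q \<in> S"
      then obtain l where l: "l \<noteq> 0" "Q = pt (psi l)" unfolding S_def by blast
      then have "lift (gam l) (pt r0) \<in> K" using K(3,4) by blast
      then show "Q \<in> K" using l psi_pt by simp
    qed
    then have ZK: "Z \<subseteq> K" using ZclS cl_min[OF K(2)] by simp
    show ?thesis
    proof (rule ccontr)
      assume "Z \<noteq> K"
      then have "Z \<subset> K" using ZK by blast
      then have "\<exists>W1 W2. zirreducible W1 \<and> zirreducible W2 \<and> W2 \<subset> W1 \<and> W1 \<subset> K"
        using irr zs0 sub0Z by (intro exI[of _ Z] exI[of _ "{pt r0}"]) simp
      then show False using K(1) unfolding irred_curve_def by simp
    qed
  qed
  have gamK: "\<forall>l. l \<noteq> 0 \<longrightarrow> lift (gam l) ` CC = CC" "\<forall>l. l \<noteq> 0 \<longrightarrow> lift (gam l) ` CC' = CC'"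
    using good_GG[OF GG.ggam] by (simp_all add: good_def)
  from A show ?thesis
  proof
    assume h: "cW r0 = 0 \<and> cX r0 + cZ r0 = 0 \<and> cY r0 + cT r0 = 0 \<and> cZ r0 = cT r0 \<and> cU2 r0 = cV2 r0"
    then have "ECC r0" using ex2 r0(3,4) xy by (simp add: ECC_def)
    then have "pt r0 \<in> CC" using CC_pt r0(1) by blast
    then have "Z = CC" using fin[OF irr_CC zclosed_CC _ gamK(1)] by blast
    then show ?thesis by blast
  next
    assume h: "cX r0 = cZ r0 \<and> cT r0 = cY r0"
    then have "ECC' r0" using EX0 by (simp add: ECC'_def)
    then have "pt r0 \<in> CC'" using CC'_pt r0(1) by blast
    then have "Z = CC'" using fin[OF irr_CC' zclosed_CC' _ gamK(2)] by blast
    then show ?thesis by blast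
  qed
qed


lemma main_dir:
  assumes Zs: "Z \<subseteq> XX" and ic: "irred_curve Z" and inv: "\<forall>g\<in>GG. g ` Z = Z"
  shows "Z = CC \<or> Z = CC'"
proof -
  have irr: "zirreducible Z" using ic by (simp add: irred_curve_def)
  show ?thesis
  proof (cases "\<exists>r. valid r \<and> pt r \<in> Z \<and> cU1 r * cV1 r \<noteq> 0")
    case False
    then show ?thesis using case_no[OF Zs irr inv] by blast
  next
    case True
    then obtain r where r: "valid r" "pt r \<in> Z" "cU1 r * cV1 r \<noteq> 0" by blast
    have u1: "cU1 r \<noteq> 0" and v1: "cV1 r \<noteq> 0" using r(3) by auto
    define l where "l = csqrt (cU1 r / cV1 r)"
    have l2: "l * l = cU1 r / cV1 r" unfolding l_def using power2_csqrt[of "cU1 r / cV1 r"]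
      by (simp add: power2_eq_square)
    have l0: "l \<noteq> 0" using l2 u1 v1 by auto
    define k where "k = 1 / (l * cV1 r)"
    have k0: "k \<noteq> 0" using l0 v1 by (simp add: k_def)
    define r0 where "r0 = scl k 1 1 (gam l r)"
    have v0: "valid r0" using r(1) l0 k0 by (simp add: r0_def)
    have "pt r0 = pt (gam l r)" using k0 by (simp add: r0_def pt_scl)
    also have "\<dots> = lift (gam l) (pt r)" by (simp add: lift_gam)
    finally have "pt r0 \<in> Z" using inv GG.ggam[OF l0] r(2) by auto
    moreover have "cU1 r0 = 1"
    proof -
      have "cU1 r0 = cU1 r / (l * l * cV1 r)" using l0 v1 by (simp add: r0_def k_def field_simps)
      also have "\<dots> = 1" using l2 u1 v1 by (simp add: field_simps)
      finally show ?thesis .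
    qed
    moreover have "cV1 r0 = 1" using l0 v1 by (simp add: r0_def k_def)
    ultimately show ?thesis using core[OF Zs ic inv v0] by blast
  qed
qed

theorem lemma4p16:
  shows "\<not> (\<exists>P\<in>XX. \<forall>g\<in>GG. g P = P)
    \<and> (\<forall>Z. (Z \<subseteq> XX \<and> irred_curve Z \<and> (\<forall>g\<in>GG. g ` Z = Z)) \<longleftrightarrow> (Z = CC \<or> Z = CC'))"
proof (rule conjI)
  show "\<not> (\<exists>P\<in>XX. \<forall>g\<in>GG. g P = P)" by (rule no_fixed)
next
  show "\<forall>Z. (Z \<subseteq> XX \<and> irred_curve Z \<and> (\<forall>g\<in>GG. g ` Z = Z)) \<longleftrightarrow> (Z = CC \<or> Z = CC')"
  proof (intro allI iffI)
  fix Z assume "Z \<subseteq> XX \<and> irred_curve Z \<and> (\<forall>g\<in>GG. g ` Z = Z)"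
  then show "Z = CC \<or> Z = CC'" using main_dir by blast
next
  fix Z assume "Z = CC \<or> Z = CC'"
  then show "Z \<subseteq> XX \<and> irred_curve Z \<and> (\<forall>g\<in>GG. g ` Z = Z)"
  proof
    assume "Z = CC"
    then show ?thesis using CC_XX irr_CC good_GG by (simp add: good_def)
  next
    assume "Z = CC'"
    then show ?thesis using CC'_XX irr_CC' good_GG by (simp add: good_def)
  qed
  qed
qed

end
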